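(* Let $K$ be a field of any characteristic and let $I_A\subset K[x_1,\ldots,x_n]$ be a toric ideal of height $2$. Then $I_A$ is radical splittable if and only if $I_A$ is a set-theoretic complete intersection on binomials.
   Context: $A=\{{\bf a}_1,\ldots,{\bf a}_n\}\subset\mathbb{Z}^m$ with $\ker_{\mathbb{Z}}(A)\cap\mathbb{N}^n=\{{\bf 0}\}$; $I_A$ is the kernel of $K[x_1,\ldots,x_n]\to K[t_1^{\pm1},\ldots,t_m^{\pm1}]$, $x_i\mapsto{\bf t}^{{\bf a}_i}$. $\mathrm{bar}(I_A)$ is the smallest $t$ such that there exist binomials $B_1,\ldots,B_t\in I_A$ with $I_A=\mathrm{rad}(B_1,\ldots,B_t)$; $I_A$ is a set-theoretic complete intersection on binomials if $\mathrm{bar}(I_A)=\mathrm{ht}(I_A)$. $I_A$ is radical splittable if there exist toric ideals $I_{A_1},I_{A_2}\subset K[x_1,\ldots,x_n]$ with $I_A=\mathrm{rad}(I_{A_1}+I_{A_2})$ and $I_{A_i}\ne I_A$ for $i=1,2$. *)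

theory Defs
  imports Main "HOL-Library.Poly_Mapping" "HOL-Library.Extended_Nat"
begin

type_synonym 'k mpoly = "(nat \<Rightarrow>\<^sub>0 nat) \<Rightarrow>\<^sub>0 'k"

text \<open>The polynomial ring K[x_1,...,x_n] (variables indexed 0..n-1).\<close>
definition polyring :: "nat \<Rightarrow> 'k::field mpoly set" where
  "polyring n = {f. \<forall>u\<in>Poly_Mapping.keys f. Poly_Mapping.keys u \<subseteq> {..<n}}"

definition poly_ideal_gen :: "nat \<Rightarrow> 'k::field mpoly set \<Rightarrow> 'k mpoly set" where
  "poly_ideal_gen n S = {\<Sum>i<k. r i * s i | (k::nat) (r::nat \<Rightarrow> 'k mpoly) (s::nat \<Rightarrow> 'k mpoly).
      \<forall>i<k. r i \<in> polyring n \<and> s i \<in> S}"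

definition is_ideal :: "nat \<Rightarrow> 'k::field mpoly set \<Rightarrow> bool" where
  "is_ideal n I \<longleftrightarrow> I \<subseteq> polyring n \<and> 0 \<in> I \<and> (\<forall>f\<in>I. \<forall>g\<in>I. f + g \<in> I)
     \<and> (\<forall>f\<in>I. \<forall>r\<in>polyring n. r * f \<in> I)"

definition poly_rad :: "nat \<Rightarrow> 'k::field mpoly set \<Rightarrow> 'k mpoly set" where
  "poly_rad n I = {f \<in> polyring n. \<exists>k. f ^ k \<in> I}"

definition is_prime_ideal :: "nat \<Rightarrow> 'k::field mpoly set \<Rightarrow> bool" where
  "is_prime_ideal n P \<longleftrightarrow> is_ideal n P \<and> 1 \<notin> P \<and>
     (\<forall>f\<in>polyring n. \<forall>g\<in>polyring n. f * g \<in> P \<longrightarrow> f \<in> P \<or> g \<in> P)"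

definition prime_height :: "nat \<Rightarrow> 'k::field mpoly set \<Rightarrow> enat" where
  "prime_height n P = Sup {enat k | k. \<exists>C :: nat \<Rightarrow> 'k mpoly set.
      (\<forall>i\<le>k. is_prime_ideal n (C i)) \<and> (\<forall>i<k. C i \<subset> C (Suc i)) \<and> C k = P}"

definition ideal_height :: "nat \<Rightarrow> 'k::field mpoly set \<Rightarrow> enat" where
  "ideal_height n I = (INF P \<in> {P. is_prime_ideal n P \<and> I \<subseteq> P}. prime_height n P)"

definition is_binomial :: "'k::field mpoly \<Rightarrow> bool" where
  "is_binomial f \<longleftrightarrow> (\<exists>u v c d. f = Poly_Mapping.single u c + Poly_Mapping.single v d)"

text \<open>A = {a_1,...,a_n} \<subseteq> Z^m given by a_i = (A i 0, ..., A i (m-1)), i < n.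
  The A-degree of the monomial x^u is the vector sum_i u_i a_i in Z^m (as a function, 0 beyond m).\<close>
definition Adeg :: "nat \<Rightarrow> nat \<Rightarrow> (nat \<Rightarrow> nat \<Rightarrow> int) \<Rightarrow> (nat \<Rightarrow>\<^sub>0 nat) \<Rightarrow> nat \<Rightarrow> int" where
  "Adeg n m A u = (\<lambda>j. if j < m then (\<Sum>i<n. int (Poly_Mapping.lookup u i) * A i j) else 0)"

text \<open>Toric ideal: kernel of x_i \<mapsto> t^{a_i} into the Laurent polynomial ring
  (= group algebra of Z^m): f maps to zero iff for each b in Z^m the coefficients of
  the monomials of A-degree b sum to zero.\<close>
definition toric_ideal :: "'k::field itself \<Rightarrow> nat \<Rightarrow> nat \<Rightarrow> (nat \<Rightarrow> nat \<Rightarrow> int) \<Rightarrow> 'k mpoly set" where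
  "toric_ideal _ n m A = {f \<in> polyring n. \<forall>b. (\<Sum>u\<in>{u\<in>Poly_Mapping.keys f. Adeg n m A u = b}. Poly_Mapping.lookup f u) = 0}"

definition pointed_config :: "nat \<Rightarrow> nat \<Rightarrow> (nat \<Rightarrow> nat \<Rightarrow> int) \<Rightarrow> bool" where
  "pointed_config n m A \<longleftrightarrow> (\<forall>u. Poly_Mapping.keys u \<subseteq> {..<n} \<and> Adeg n m A u = (\<lambda>_. 0) \<longrightarrow> u = 0)"

definition bar :: "nat \<Rightarrow> 'k::field mpoly set \<Rightarrow> nat" where
  "bar n I = (LEAST t. \<exists>B :: nat \<Rightarrow> 'k mpoly. (\<forall>i<t. is_binomial (B i) \<and> B i \<in> I)
       \<and> I = poly_rad n (poly_ideal_gen n (B ` {..<t})))"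

definition stci_binomials :: "nat \<Rightarrow> 'k::field mpoly set \<Rightarrow> bool" where
  "stci_binomials n I \<longleftrightarrow> enat (bar n I) = ideal_height n I"

definition is_toric_ideal :: "nat \<Rightarrow> 'k::field mpoly set \<Rightarrow> bool" where
  "is_toric_ideal n J \<longleftrightarrow> (\<exists>m' A'. J = toric_ideal TYPE('k) n m' A')"

definition radical_splittable :: "nat \<Rightarrow> 'k::field mpoly set \<Rightarrow> bool" where
  "radical_splittable n I \<longleftrightarrow> (\<exists>I1 I2. is_toric_ideal n I1 \<and> is_toric_ideal n I2 \<and>
      I = poly_rad n (poly_ideal_gen n (I1 \<union> I2)) \<and> I1 \<noteq> I \<and> I2 \<noteq> I)"

end

theory Submission
  imports Defs "HOL-Library.Ramsey"
begin

definition Exps :: "nat \<Rightarrow> (nat \<Rightarrow>\<^sub>0 nat) set" where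
  "Exps n = {u. Poly_Mapping.keys u \<subseteq> {..<n}}"

definition mon :: "(nat \<Rightarrow>\<^sub>0 nat) \<Rightarrow> 'k::field mpoly" where
  "mon u = Poly_Mapping.single u 1"

definition bin :: "(nat \<Rightarrow>\<^sub>0 nat) \<Rightarrow> (nat \<Rightarrow>\<^sub>0 nat) \<Rightarrow> 'k::field mpoly" where
  "bin u v = mon u - mon v"

lemma Exps_add: "u \<in> Exps n \<Longrightarrow> v \<in> Exps n \<Longrightarrow> u + v \<in> Exps n"
  unfolding Exps_def using keys_add[of u v] by auto

lemma Exps_0[simp]: "0 \<in> Exps n" by (simp add: Exps_def)

lemma polyring_0[simp]: "0 \<in> polyring n" by (simp add: polyring_def)
lemma polyring_1[simp]: "1 \<in> polyring n"
  by (simp add: polyring_def flip: single_one)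

lemma polyring_single: "u \<in> Exps n \<Longrightarrow> Poly_Mapping.single u c \<in> polyring n"
  by (simp add: polyring_def Exps_def)

lemma polyring_mon[simp]: "u \<in> Exps n \<Longrightarrow> mon u \<in> polyring n"
  by (simp add: mon_def polyring_single)

lemma polyring_add[simp]: "f \<in> polyring n \<Longrightarrow> g \<in> polyring n \<Longrightarrow> f + g \<in> polyring n"
  unfolding polyring_def using keys_add[of f g] by auto

lemma polyring_diff[simp]: "f \<in> polyring n \<Longrightarrow> g \<in> polyring n \<Longrightarrow> f - g \<in> polyring n"
  unfolding polyring_def using keys_diff[of f g] by auto

lemma polyring_uminus[simp]: "f \<in> polyring n \<Longrightarrow> - f \<in> polyring n"
  unfolding polyring_def by simp

lemma polyring_mult[simp]: "f \<in> polyring n \<Longrightarrow> g \<in> polyring n \<Longrightarrow> f * g \<in> polyring n"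
proof -
  assume f: "f \<in> polyring n" and g: "g \<in> polyring n"
  show ?thesis unfolding polyring_def mem_Collect_eq
  proof
    fix w assume "w \<in> Poly_Mapping.keys (f * g)"
    then obtain a b where "w = a + b" "a \<in> Poly_Mapping.keys f" "b \<in> Poly_Mapping.keys g"
      using keys_mult[of f g] by auto
    then show "Poly_Mapping.keys w \<subseteq> {..<n}"
    proof -
      have "Poly_Mapping.keys a \<subseteq> {..<n}" "Poly_Mapping.keys b \<subseteq> {..<n}"
        using f g \<open>a \<in> _\<close> \<open>b \<in> _\<close> unfolding polyring_def by auto
      then show ?thesis using keys_add[of a b] \<open>w = a + b\<close> by auto
    qed
  qed
qed

lemma polyring_power[simp]: "f \<in> polyring n \<Longrightarrow> f ^ k \<in> polyring n"
  by (induction k) auto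

lemma polyring_sum[simp]: "(\<And>i. i \<in> S \<Longrightarrow> f i \<in> polyring n) \<Longrightarrow> sum f S \<in> polyring n"
  by (induction S rule: infinite_finite_induct) auto

lemma polyring_bin[simp]: "u \<in> Exps n \<Longrightarrow> v \<in> Exps n \<Longrightarrow> bin u v \<in> polyring n"
  by (simp add: bin_def)

lemma mon_mult: "mon u * mon v = mon (u + v)"
  by (simp add: mon_def mult_single)

lemma mon_0[simp]: "mon 0 = 1" by (simp add: mon_def)

lemma keys_polyring: "f \<in> polyring n \<Longrightarrow> u \<in> Poly_Mapping.keys f \<Longrightarrow> u \<in> Exps n"
  by (auto simp: polyring_def Exps_def)

definition kmap :: "('a \<Rightarrow> 'b) \<Rightarrow> ('a \<Rightarrow>\<^sub>0 'c::comm_ring_1) \<Rightarrow> ('b \<Rightarrow>\<^sub>0 'c)" where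
  "kmap h f = (\<Sum>u\<in>Poly_Mapping.keys f. Poly_Mapping.single (h u) (Poly_Mapping.lookup f u))"

lemma pm_sum_single: "f = (\<Sum>u\<in>Poly_Mapping.keys f. Poly_Mapping.single u (Poly_Mapping.lookup f u))"
proof (rule poly_mapping_eqI)
  fix k
  have "Poly_Mapping.lookup (\<Sum>u\<in>Poly_Mapping.keys f. Poly_Mapping.single u (Poly_Mapping.lookup f u)) k
      = (\<Sum>u\<in>Poly_Mapping.keys f. (if u = k then Poly_Mapping.lookup f u else 0))"
    by (simp add: lookup_sum lookup_single when_def)
  also have "\<dots> = Poly_Mapping.lookup f k"
    by (simp add: sum.delta in_keys_iff)
  finally show "Poly_Mapping.lookup f k = Poly_Mapping.lookup (\<Sum>u\<in>Poly_Mapping.keys f. Poly_Mapping.single u (Poly_Mapping.lookup f u)) k" by simp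
qed

lemma kmap_add: "kmap h (f + g) = kmap h f + kmap h g"
  unfolding kmap_def
  by (rule setsum_keys_plus_distrib) (auto simp: single_add)

lemma kmap_0[simp]: "kmap h 0 = 0" by (simp add: kmap_def)

lemma kmap_sum: "kmap h (sum f S) = (\<Sum>i\<in>S. kmap h (f i))"
  by (induction S rule: infinite_finite_induct) (auto simp: kmap_add)

lemma kmap_single[simp]: "kmap h (Poly_Mapping.single u c) = Poly_Mapping.single (h u) c"
  by (cases "c = 0") (auto simp: kmap_def)

lemma kmap_uminus: "kmap h (- f) = - kmap h f"
  using kmap_add[of h f "-f"] by (simp add: eq_neg_iff_add_eq_0 add.commute)

lemma kmap_diff: "kmap h (f - g) = kmap h f - kmap h g"
  using kmap_add[of h f "-g"] kmap_uminus[of h g] by simp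

lemma lookup_kmap: "Poly_Mapping.lookup (kmap h f) b =
   (\<Sum>u\<in>{u\<in>Poly_Mapping.keys f. h u = b}. Poly_Mapping.lookup f u)"
proof -
  have "Poly_Mapping.lookup (kmap h f) b = (\<Sum>u\<in>Poly_Mapping.keys f. (if h u = b then Poly_Mapping.lookup f u else 0))"
    by (simp add: kmap_def lookup_sum lookup_single when_def)
  also have "\<dots> = (\<Sum>u\<in>{u\<in>Poly_Mapping.keys f. h u = b}. Poly_Mapping.lookup f u)"
    by (simp add: sum.inter_filter)
  finally show ?thesis .
qed

lemma kmap_mult:
  fixes h :: "'a::comm_monoid_add \<Rightarrow> 'b::comm_monoid_add"
  assumes hadd: "\<And>a b. h (a + b) = h a + h b"
  shows "kmap h (f * g) = kmap h f * (kmap h g :: 'b \<Rightarrow>\<^sub>0 'c::comm_ring_1)"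
proof -
  let ?F = "Poly_Mapping.keys f" and ?G = "Poly_Mapping.keys g"
  have "f * g = (\<Sum>u\<in>?F. Poly_Mapping.single u (Poly_Mapping.lookup f u)) * (\<Sum>v\<in>?G. Poly_Mapping.single v (Poly_Mapping.lookup g v))"
    using pm_sum_single[of f] pm_sum_single[of g] by simp
  also have "\<dots> = (\<Sum>u\<in>?F. \<Sum>v\<in>?G. Poly_Mapping.single (u + v) (Poly_Mapping.lookup f u * Poly_Mapping.lookup g v))"
    by (simp add: sum_product mult_single)
  finally have fg: "f * g = \<dots>" .
  have "kmap h f * kmap h g = (\<Sum>u\<in>?F. Poly_Mapping.single (h u) (Poly_Mapping.lookup f u)) * (\<Sum>v\<in>?G. Poly_Mapping.single (h v) (Poly_Mapping.lookup g v))"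
    by (simp add: kmap_def)
  also have "\<dots> = (\<Sum>u\<in>?F. \<Sum>v\<in>?G. Poly_Mapping.single (h u + h v) (Poly_Mapping.lookup f u * Poly_Mapping.lookup g v))"
    by (simp add: sum_product mult_single)
  finally show ?thesis using fg by (simp add: kmap_sum hadd)
qed

lemma Adeg_fin: "finite {j. Adeg n m A u j \<noteq> 0}"
  by (rule finite_subset[of _ "{..<m}"]) (auto simp: Adeg_def)

definition Dg :: "nat \<Rightarrow> nat \<Rightarrow> (nat \<Rightarrow> nat \<Rightarrow> int) \<Rightarrow> (nat \<Rightarrow>\<^sub>0 nat) \<Rightarrow> (nat \<Rightarrow>\<^sub>0 int)" where
  "Dg n m A u = Abs_poly_mapping (Adeg n m A u)"

lemma lookup_Dg: "Poly_Mapping.lookup (Dg n m A u) = Adeg n m A u"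
  unfolding Dg_def using Adeg_fin[of n m A u] by simp

lemma Dg_eq_iff: "Dg n m A u = b \<longleftrightarrow> Adeg n m A u = Poly_Mapping.lookup b"
  by (metis lookup_Dg poly_mapping_eq_iff)

lemma Dg_eq_Dg: "Dg n m A u = Dg n m A v \<longleftrightarrow> Adeg n m A u = Adeg n m A v"
  by (simp add: Dg_eq_iff lookup_Dg)

lemma Adeg_add: "Adeg n m A (u + v) = (\<lambda>j. Adeg n m A u j + Adeg n m A v j)"
  by (auto simp: Adeg_def lookup_add sum.distrib distrib_right fun_eq_iff)

lemma Dg_add: "Dg n m A (u + v) = Dg n m A u + Dg n m A v"
  by (rule poly_mapping_eqI) (simp add: lookup_add lookup_Dg Adeg_add)

definition phi :: "nat \<Rightarrow> nat \<Rightarrow> (nat \<Rightarrow> nat \<Rightarrow> int) \<Rightarrow> 'k::field mpoly \<Rightarrow> ((nat \<Rightarrow>\<^sub>0 int) \<Rightarrow>\<^sub>0 'k)" where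
  "phi n m A f = kmap (Dg n m A) f"

lemma phi_mult: "phi n m A (f * g) = phi n m A f * phi n m A g"
  unfolding phi_def by (rule kmap_mult) (rule Dg_add)

lemma phi_add: "phi n m A (f + g) = phi n m A f + phi n m A g"
  unfolding phi_def by (rule kmap_add)

lemma phi_diff: "phi n m A (f - g) = phi n m A f - phi n m A g"
  unfolding phi_def by (rule kmap_diff)

lemma phi_0[simp]: "phi n m A 0 = 0" by (simp add: phi_def)

lemma phi_single: "phi n m A (Poly_Mapping.single u c) = Poly_Mapping.single (Dg n m A u) c"
  unfolding phi_def by simp

lemma toric_iff:
  "f \<in> toric_ideal TYPE('k::field) n m A \<longleftrightarrow> f \<in> polyring n \<and> phi n m A (f::'k mpoly) = 0"
proof -
  have "(\<forall>b. (\<Sum>u\<in>{u\<in>Poly_Mapping.keys f. Adeg n m A u = b}. Poly_Mapping.lookup f u) = 0)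
     \<longleftrightarrow> phi n m A f = 0" (is "?L \<longleftrightarrow> ?R")
  proof
    assume L: ?L
    show ?R
    proof (rule poly_mapping_eqI)
      fix b
      have "Poly_Mapping.lookup (phi n m A f) b = (\<Sum>u\<in>{u\<in>Poly_Mapping.keys f. Adeg n m A u = Poly_Mapping.lookup b}. Poly_Mapping.lookup f u)"
        unfolding phi_def lookup_kmap Dg_eq_iff ..
      also have "\<dots> = 0" by (rule L[rule_format])
      finally show "Poly_Mapping.lookup (phi n m A f) b = Poly_Mapping.lookup 0 b" by simp
    qed
  next
    assume R: ?R
    show ?L
    proof
      fix b
      show "(\<Sum>u\<in>{u\<in>Poly_Mapping.keys f. Adeg n m A u = b}. Poly_Mapping.lookup f u) = 0"
      proof (cases "\<exists>u0\<in>Poly_Mapping.keys f. Adeg n m A u0 = b")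
        case True
        then obtain u0 where "Adeg n m A u0 = b" by blast
        then have bb: "b = Poly_Mapping.lookup (Dg n m A u0)" by (simp add: lookup_Dg)
        have "(\<Sum>u\<in>{u\<in>Poly_Mapping.keys f. Adeg n m A u = b}. Poly_Mapping.lookup f u)
            = Poly_Mapping.lookup (phi n m A f) (Dg n m A u0)"
          unfolding phi_def lookup_kmap Dg_eq_iff bb ..
        then show ?thesis using R by simp
      next
        case False
        have E: "{u\<in>Poly_Mapping.keys f. Adeg n m A u = b} = {}" using False by auto
        show ?thesis unfolding E by simp
      qed
    qed
  qed
  then show ?thesis unfolding toric_ideal_def mem_Collect_eq by simp
qed

lemma toric_subset: "toric_ideal TYPE('k::field) n m A \<subseteq> polyring n"
  by (auto simp: toric_iff)

lemma toric_is_ideal: "is_ideal n (toric_ideal TYPE('k::field) n m A)"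
  unfolding is_ideal_def
  by (auto simp: toric_iff phi_add phi_mult)

lemma phi_one: "phi n m A (1::'k::field mpoly) \<noteq> 0"
proof -
  have "phi n m A (1::'k mpoly) = Poly_Mapping.single (Dg n m A 0) 1"
    by (simp add: phi_single flip: single_one)
  then show ?thesis by (metis lookup_single_eq one_neq_zero lookup_zero)
qed

lemma toric_prime: "is_prime_ideal n (toric_ideal TYPE('k::field) n m A)"
proof -
  have "(1::'k mpoly) \<notin> toric_ideal TYPE('k) n m A" using phi_one[of n m A, where 'k='k] by (simp add: toric_iff)
  then show ?thesis unfolding is_prime_ideal_def
    using toric_is_ideal[of n m A, where 'k='k] by (auto simp: toric_iff phi_mult)
qed

lemma bin_in_toric:
  assumes "u \<in> Exps n" "v \<in> Exps n" "Adeg n m A u = Adeg n m A v"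
  shows "bin u v \<in> toric_ideal TYPE('k::field) n m A"
proof -
  have "bin u v \<in> polyring n" using assms by simp
  moreover have "phi n m A (bin u v :: 'k mpoly) = 0"
  proof -
    have "Dg n m A u = Dg n m A v" using assms(3) by (simp add: Dg_eq_Dg)
    then show ?thesis by (simp add: bin_def mon_def phi_diff phi_single)
  qed
  ultimately show ?thesis by (simp add: toric_iff)
qed

lemma toric_bin_imp:
  assumes "bin u v \<in> toric_ideal TYPE('k::field) n m A"
  shows "Adeg n m A u = Adeg n m A v"
proof -
  have "phi n m A (bin u v :: 'k mpoly) = 0" using assms by (simp add: toric_iff)
  then have "Poly_Mapping.single (Dg n m A u) (1::'k) = Poly_Mapping.single (Dg n m A v) 1"
    by (simp add: bin_def mon_def phi_diff phi_single)
  then have "Dg n m A u = Dg n m A v"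
    by (metis lookup_single_eq lookup_single_not_eq one_neq_zero)
  then show ?thesis by (simp add: Dg_eq_Dg)
qed

lemma scal_bin: "Poly_Mapping.single 0 c * bin u v = Poly_Mapping.single u c - Poly_Mapping.single v (c::'k::field)"
  by (simp add: bin_def mon_def right_diff_distrib mult_single)

lemma toric_repr:
  assumes f: "f \<in> toric_ideal TYPE('k::field) n m A"
  shows "\<exists>r. (\<forall>u\<in>Poly_Mapping.keys f. r u \<in> Poly_Mapping.keys f \<and> Adeg n m A (r u) = Adeg n m A u)
     \<and> f = (\<Sum>u\<in>Poly_Mapping.keys f. Poly_Mapping.single 0 (Poly_Mapping.lookup f u) * bin u (r u))"
proof -
  define r where "r u = (SOME v. v \<in> Poly_Mapping.keys f \<and> Adeg n m A v = Adeg n m A u)" for u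
  have r: "r u \<in> Poly_Mapping.keys f \<and> Adeg n m A (r u) = Adeg n m A u" if "u \<in> Poly_Mapping.keys f" for u
  proof -
    have "\<exists>v. v \<in> Poly_Mapping.keys f \<and> Adeg n m A v = Adeg n m A u" using that by auto
    then show ?thesis unfolding r_def by (rule someI_ex)
  qed
  have rcong: "Adeg n m A u = Adeg n m A u' \<Longrightarrow> r u = r u'" for u u'
    unfolding r_def by simp
  have Z: "(\<Sum>u\<in>Poly_Mapping.keys f. Poly_Mapping.single (r u) (Poly_Mapping.lookup f u)) = 0"
  proof (rule poly_mapping_eqI)
    fix w
    have "Poly_Mapping.lookup (\<Sum>u\<in>Poly_Mapping.keys f. Poly_Mapping.single (r u) (Poly_Mapping.lookup f u)) w
        = (\<Sum>u\<in>Poly_Mapping.keys f. if r u = w then Poly_Mapping.lookup f u else 0)"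
      by (simp add: lookup_sum lookup_single when_def)
    also have "\<dots> = (\<Sum>u\<in>{u\<in>Poly_Mapping.keys f. r u = w}. Poly_Mapping.lookup f u)"
      by (simp add: sum.inter_filter)
    also have "\<dots> = 0"
    proof (cases "\<exists>u0\<in>Poly_Mapping.keys f. r u0 = w")
      case True
      then obtain u0 where u0: "u0 \<in> Poly_Mapping.keys f" "r u0 = w" by blast
      have "{u\<in>Poly_Mapping.keys f. r u = w} = {u\<in>Poly_Mapping.keys f. Adeg n m A u = Adeg n m A w}"
      proof (intro set_eqI iffI)
        fix u assume "u \<in> {u\<in>Poly_Mapping.keys f. r u = w}"
        then have "u \<in> Poly_Mapping.keys f" "r u = w" by auto
        then show "u \<in> {u\<in>Poly_Mapping.keys f. Adeg n m A u = Adeg n m A w}" using r[of u] by auto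
      next
        fix u assume u: "u \<in> {u\<in>Poly_Mapping.keys f. Adeg n m A u = Adeg n m A w}"
        have "Adeg n m A u = Adeg n m A u0" using u r[OF u0(1)] u0(2) by simp
        then have "r u = r u0" by (rule rcong)
        then show "u \<in> {u\<in>Poly_Mapping.keys f. r u = w}" using u u0 by auto
      qed
      then show ?thesis using f unfolding toric_ideal_def by simp
    next
      case False
      have E: "{u\<in>Poly_Mapping.keys f. r u = w} = {}" using False by auto
      show ?thesis unfolding E by simp
    qed
    finally show "Poly_Mapping.lookup (\<Sum>u\<in>Poly_Mapping.keys f. Poly_Mapping.single (r u) (Poly_Mapping.lookup f u)) w = Poly_Mapping.lookup 0 w" by simp
  qed
  have "(\<Sum>u\<in>Poly_Mapping.keys f. Poly_Mapping.single 0 (Poly_Mapping.lookup f u) * bin u (r u))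
      = (\<Sum>u\<in>Poly_Mapping.keys f. Poly_Mapping.single u (Poly_Mapping.lookup f u))
        - (\<Sum>u\<in>Poly_Mapping.keys f. Poly_Mapping.single (r u) (Poly_Mapping.lookup f u))"
    by (simp add: scal_bin sum_subtractf)
  also have "\<dots> = f" using Z pm_sum_single[of f] by simp
  finally have "f = (\<Sum>u\<in>Poly_Mapping.keys f. Poly_Mapping.single 0 (Poly_Mapping.lookup f u) * bin u (r u))" by simp
  then show ?thesis using r by auto
qed

lemma sum_split_add: "(\<Sum>i<k1+k2. h i) = (\<Sum>i<k1. h i) + (\<Sum>i<k2. h (k1 + i))"
  for h :: "nat \<Rightarrow> 'a::comm_monoid_add"
  by (induction k2) (simp_all add: add.assoc)

lemma gen_E: "f \<in> poly_ideal_gen n S \<Longrightarrow> \<exists>(k::nat) r s. f = (\<Sum>i<k. r i * s i) \<and> (\<forall>i<k. r i \<in> polyring n \<and> s i \<in> S)"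
  unfolding poly_ideal_gen_def by simp

lemma gen_0[simp]: "0 \<in> poly_ideal_gen n S"
  unfolding poly_ideal_gen_def
  by (rule CollectI, rule exI[of _ 0]) auto

lemma gen_base: "s \<in> S \<Longrightarrow> s \<in> poly_ideal_gen n S"
  unfolding poly_ideal_gen_def
  by (rule CollectI, rule exI[of _ 1], rule exI[of _ "\<lambda>_. 1"], rule exI[of _ "\<lambda>_. s"]) auto

lemma gen_add:
  assumes "f \<in> poly_ideal_gen n S" "g \<in> poly_ideal_gen n S"
  shows "f + g \<in> poly_ideal_gen n S"
proof -
  obtain k1 :: nat and r1 s1 where 1: "f = (\<Sum>i<k1. r1 i * s1 i)" "\<forall>i<k1. r1 i \<in> polyring n \<and> s1 i \<in> S"
    using gen_E[OF assms(1)] by blast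
  obtain k2 :: nat and r2 s2 where 2: "g = (\<Sum>i<k2. r2 i * s2 i)" "\<forall>i<k2. r2 i \<in> polyring n \<and> s2 i \<in> S"
    using gen_E[OF assms(2)] by blast
  define r where "r i = (if i < k1 then r1 i else r2 (i - k1))" for i
  define s where "s i = (if i < k1 then s1 i else s2 (i - k1))" for i
  have "(\<Sum>i<k1+k2. r i * s i) = f + g"
    unfolding sum_split_add 1 2 r_def s_def by simp
  moreover have "\<forall>i<k1+k2. r i \<in> polyring n \<and> s i \<in> S"
    using 1(2) 2(2) unfolding r_def s_def by auto
  ultimately show ?thesis unfolding poly_ideal_gen_def
    by (intro CollectI exI[of _ "k1+k2"] exI[of _ r] exI[of _ s]) auto
qed

lemma gen_mult:
  assumes "f \<in> poly_ideal_gen n S" "q \<in> polyring n"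
  shows "q * f \<in> poly_ideal_gen n S"
proof -
  obtain k :: nat and r s where 1: "f = (\<Sum>i<k. r i * s i)" "\<forall>i<k. r i \<in> polyring n \<and> s i \<in> S"
    using gen_E[OF assms(1)] by blast
  have "q * f = (\<Sum>i<k. (q * r i) * s i)"
    unfolding 1 by (simp add: sum_distrib_left mult.assoc)
  moreover have "\<forall>i<k. q * r i \<in> polyring n \<and> s i \<in> S" using 1(2) assms(2) by auto
  ultimately show ?thesis unfolding poly_ideal_gen_def by (auto intro!: exI[of _ k])
qed

lemma gen_sum: "(\<And>i. i \<in> I \<Longrightarrow> f i \<in> poly_ideal_gen n S) \<Longrightarrow> sum f I \<in> poly_ideal_gen n S"
  by (induction I rule: infinite_finite_induct) (auto intro: gen_add)

lemma gen_diff: "f \<in> poly_ideal_gen n S \<Longrightarrow> g \<in> poly_ideal_gen n S \<Longrightarrow> f - g \<in> poly_ideal_gen n S"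
  using gen_add[of f n S "(-1) * g"] gen_mult[of g n S "-1"] by simp

lemma gen_subset_polyring: "S \<subseteq> polyring n \<Longrightarrow> poly_ideal_gen n S \<subseteq> polyring n"
  unfolding poly_ideal_gen_def by (auto intro!: polyring_sum)

lemma gen_ideal: "S \<subseteq> polyring n \<Longrightarrow> is_ideal n (poly_ideal_gen n S)"
  unfolding is_ideal_def using gen_subset_polyring[of S n]
  by (auto intro: gen_add gen_mult)

lemma ideal_sum: "is_ideal n J \<Longrightarrow> (\<And>i. i \<in> I \<Longrightarrow> f i \<in> J) \<Longrightarrow> sum f I \<in> J"
  by (induction I rule: infinite_finite_induct) (auto simp: is_ideal_def)

lemma gen_least: "is_ideal n J \<Longrightarrow> S \<subseteq> J \<Longrightarrow> poly_ideal_gen n S \<subseteq> J"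
  unfolding poly_ideal_gen_def
  by (auto intro!: ideal_sum simp: is_ideal_def subset_iff)

lemma gen_mono: "S \<subseteq> S' \<Longrightarrow> poly_ideal_gen n S \<subseteq> poly_ideal_gen n S'"
  unfolding poly_ideal_gen_def by blast

lemma gen_sub_gen: "S \<subseteq> poly_ideal_gen n S' \<Longrightarrow> S' \<subseteq> polyring n \<Longrightarrow> poly_ideal_gen n S \<subseteq> poly_ideal_gen n S'"
  using gen_least gen_ideal by blast

lemma gen_single: "f \<in> poly_ideal_gen n {p} \<Longrightarrow> \<exists>q\<in>polyring n. f = q * p"
  unfolding poly_ideal_gen_def
  by (auto simp: sum_distrib_right[symmetric] intro!: polyring_sum)

lemma gen_zero: "S \<subseteq> {0} \<Longrightarrow> poly_ideal_gen n S \<subseteq> {0}"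
  unfolding poly_ideal_gen_def by (auto simp: subset_iff intro!: sum.neutral)

lemma gen_in_single: "q \<in> polyring n \<Longrightarrow> q * p \<in> poly_ideal_gen n {p}"
  by (rule gen_mult) (auto intro: gen_base)

lemma rad_mono: "J \<subseteq> J' \<Longrightarrow> poly_rad n J \<subseteq> poly_rad n J'"
  unfolding poly_rad_def by blast

lemma rad_sup: "J \<subseteq> polyring n \<Longrightarrow> J \<subseteq> poly_rad n J"
  unfolding poly_rad_def by (auto intro: exI[of _ 1])

lemma prime_pow:
  assumes P: "is_prime_ideal n P" and f: "f \<in> polyring n" and "f ^ k \<in> P"
  shows "f \<in> P"
  using assms(3)
proof (induction k)
  case 0 then show ?case using P by (simp add: is_prime_ideal_def)
next
  case (Suc k)
  then have "f * f ^ k \<in> P" by simp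
  then have "f \<in> P \<or> f ^ k \<in> P" using P f unfolding is_prime_ideal_def by auto
  then show ?case using Suc.IH by auto
qed

lemma rad_prime: "is_prime_ideal n P \<Longrightarrow> J \<subseteq> P \<Longrightarrow> poly_rad n J \<subseteq> P"
  unfolding poly_rad_def using prime_pow by blast

lemma rad_zero: "J \<subseteq> {0} \<Longrightarrow> poly_rad n J \<subseteq> {(0::'k::field mpoly)}"
  unfolding poly_rad_def by auto

lemma prime_ideal_sub: "is_prime_ideal n P \<Longrightarrow> P \<subseteq> polyring n"
  by (simp add: is_prime_ideal_def is_ideal_def)

lemma prime_0: "is_prime_ideal n P \<Longrightarrow> 0 \<in> P"
  by (simp add: is_prime_ideal_def is_ideal_def)

lemma zero_prime: "is_prime_ideal n {0::'k::field mpoly}"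
  unfolding is_prime_ideal_def is_ideal_def by auto

lemma ph_ge:
  assumes "\<forall>i\<le>k. is_prime_ideal n (C i)" "\<forall>i<k. C i \<subset> C (Suc i)" "C k = P"
  shows "enat k \<le> prime_height n P"
  unfolding prime_height_def
  by (rule Sup_upper) (use assms in blast)

lemma ph_mono:
  assumes Q: "is_prime_ideal n Q" and PQ: "P \<subseteq> Q"
  shows "prime_height n P \<le> prime_height n Q"
  unfolding prime_height_def[of n P]
proof (rule Sup_least)
  fix x assume "x \<in> {enat k |k. \<exists>C. (\<forall>i\<le>k. is_prime_ideal n (C i)) \<and> (\<forall>i<k. C i \<subset> C (Suc i)) \<and> C k = P}"
  then obtain k C where x: "x = enat k" and C: "\<forall>i\<le>k. is_prime_ideal n (C i)" "\<forall>i<k. C i \<subset> C (Suc i)" "C k = P"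
    by blast
  show "x \<le> prime_height n Q"
  proof (cases "P = Q")
    case True then show ?thesis using ph_ge[OF C] x by simp
  next
    case False
    define C' where "C' = C(Suc k := Q)"
    have "\<forall>i\<le>Suc k. is_prime_ideal n (C' i)"
      using C(1) Q unfolding C'_def by (auto simp: le_Suc_eq)
    moreover have "\<forall>i<Suc k. C' i \<subset> C' (Suc i)"
      using C(2,3) PQ False unfolding C'_def by (auto simp: less_Suc_eq)
    moreover have "C' (Suc k) = Q" unfolding C'_def by simp
    ultimately have "enat (Suc k) \<le> prime_height n Q" by (rule ph_ge)
    moreover have "enat k \<le> enat (Suc k)" by simp
    ultimately show ?thesis using x by (meson order_trans)
  qed
qed

lemma ih_prime: "is_prime_ideal n P \<Longrightarrow> ideal_height n P = prime_height n P"
  unfolding ideal_height_def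
  by (rule antisym) (auto intro!: INF_lower INF_greatest ph_mono)

lemma ph2_no3:
  assumes "prime_height n P = 2"
    and "\<forall>i\<le>3. is_prime_ideal n (C i)" "\<forall>i<3. C i \<subset> C (Suc i)" "C 3 = P"
  shows False
  using ph_ge[OF assms(2-4)] assms(1) by (simp add: numeral_eq_enat)

lemma ph2_ex2:
  assumes "prime_height n P = 2"
  shows "\<exists>C. (\<forall>i\<le>2. is_prime_ideal n (C i)) \<and> (\<forall>i<2. C i \<subset> C (Suc i)) \<and> C 2 = P"
proof (rule ccontr)
  assume no: "\<not> ?thesis"
  have "prime_height n P \<le> 1"
    unfolding prime_height_def
  proof (rule Sup_least)
    fix x assume "x \<in> {enat k |k. \<exists>C. (\<forall>i\<le>k. is_prime_ideal n (C i)) \<and> (\<forall>i<k. C i \<subset> C (Suc i)) \<and> C k = P}"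
    then obtain k C where x: "x = enat k" and C: "\<forall>i\<le>k. is_prime_ideal n (C i)" "\<forall>i<k. C i \<subset> C (Suc i)" "C k = P"
      by blast
    have "enat k \<le> 2" using ph_ge[OF C] assms by simp
    moreover have "k \<noteq> 2" using no C by blast
    ultimately show "x \<le> 1" using x by (simp add: numeral_eq_enat one_enat_def)
  qed
  then show False using assms by (simp add: numeral_eq_enat one_enat_def)
qed

definition zv :: "(nat \<Rightarrow>\<^sub>0 nat) \<Rightarrow> (nat \<Rightarrow>\<^sub>0 nat) \<Rightarrow> nat \<Rightarrow> int" where
  "zv u v i = int (Poly_Mapping.lookup u i) - int (Poly_Mapping.lookup v i)"

definition par :: "(nat \<Rightarrow> int) \<Rightarrow> (nat \<Rightarrow> int) \<Rightarrow> bool" where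
  "par z d \<longleftrightarrow> (\<forall>i j. z i * d j = z j * d i)"

definition LL :: "nat \<Rightarrow> nat \<Rightarrow> (nat \<Rightarrow> nat \<Rightarrow> int) \<Rightarrow> (nat \<Rightarrow> int) \<Rightarrow> bool" where
  "LL n m A z \<longleftrightarrow> (\<forall>i. n \<le> i \<longrightarrow> z i = 0) \<and> (\<forall>j<m. (\<Sum>i<n. z i * A i j) = 0)"

lemma Exps_lookup: "u \<in> Exps n \<Longrightarrow> n \<le> i \<Longrightarrow> Poly_Mapping.lookup u i = 0"
proof (rule ccontr)
  assume u: "u \<in> Exps n" and i: "n \<le> i" and "Poly_Mapping.lookup u i \<noteq> 0"
  then have "i \<in> Poly_Mapping.keys u" by (simp add: in_keys_iff)
  then show False using u i by (auto simp: Exps_def)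
qed

lemma zv_supp: "u \<in> Exps n \<Longrightarrow> v \<in> Exps n \<Longrightarrow> n \<le> i \<Longrightarrow> zv u v i = 0"
  by (simp add: zv_def Exps_lookup)

lemma Adeg_eq_LL:
  assumes "u \<in> Exps n" "v \<in> Exps n"
  shows "Adeg n m A u = Adeg n m A v \<longleftrightarrow> LL n m A (zv u v)"
proof -
  have "Adeg n m A u = Adeg n m A v \<longleftrightarrow> (\<forall>j<m. (\<Sum>i<n. int (Poly_Mapping.lookup u i) * A i j) = (\<Sum>i<n. int (Poly_Mapping.lookup v i) * A i j))"
    unfolding Adeg_def fun_eq_iff by auto
  also have "\<dots> \<longleftrightarrow> (\<forall>j<m. (\<Sum>i<n. zv u v i * A i j) = 0)"
    by (simp add: zv_def left_diff_distrib sum_subtractf)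
  finally show ?thesis unfolding LL_def using zv_supp[OF assms] by auto
qed

lemma zv_neq: "u \<noteq> v \<Longrightarrow> \<exists>i. zv u v i \<noteq> 0"
  by (metis poly_mapping_eqI zv_def eq_iff_diff_eq_0 of_nat_eq_iff)

lemma zv_swap: "zv v u i = - zv u v i" by (simp add: zv_def)

definition pp :: "(nat \<Rightarrow> int) \<Rightarrow> nat \<Rightarrow>\<^sub>0 nat" where
  "pp z = Abs_poly_mapping (\<lambda>i. nat (z i))"

definition np :: "(nat \<Rightarrow> int) \<Rightarrow> nat \<Rightarrow>\<^sub>0 nat" where
  "np z = pp (\<lambda>i. - z i)"

lemma lookup_pp:
  assumes "\<forall>i. n \<le> i \<longrightarrow> z i = 0"
  shows "Poly_Mapping.lookup (pp z) = (\<lambda>i. nat (z i))"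
proof -
  have "finite {i. nat (z i) \<noteq> 0}"
    by (rule finite_subset[of _ "{..<n}"]) (use assms in \<open>auto simp: not_less[symmetric]\<close>)
  then show ?thesis unfolding pp_def by simp
qed

lemma lookup_np:
  assumes "\<forall>i. n \<le> i \<longrightarrow> z i = 0"
  shows "Poly_Mapping.lookup (np z) = (\<lambda>i. nat (- z i))"
  unfolding np_def by (rule lookup_pp) (use assms in auto)

lemma pp_Exps: "\<forall>i. n \<le> i \<longrightarrow> z i = 0 \<Longrightarrow> pp z \<in> Exps n"
  unfolding Exps_def using lookup_pp[of n z]
  by (auto simp: in_keys_iff not_less[symmetric])

lemma np_Exps: "\<forall>i. n \<le> i \<longrightarrow> z i = 0 \<Longrightarrow> np z \<in> Exps n"
  unfolding np_def by (rule pp_Exps) auto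

lemma zv_pp_np: "\<forall>i. n \<le> i \<longrightarrow> z i = 0 \<Longrightarrow> zv (pp z) (np z) = z"
  using lookup_pp[of n z] lookup_np[of n z] by (auto simp: zv_def fun_eq_iff)

lemma LL_supp: "LL n m A z \<Longrightarrow> n \<le> i \<Longrightarrow> z i = 0" by (simp add: LL_def)

lemma LL_pp_np: "LL n m A z \<Longrightarrow> Adeg n m A (pp z) = Adeg n m A (np z)"
proof -
  assume L: "LL n m A z"
  then have zs: "\<forall>i. n \<le> i \<longrightarrow> z i = 0" by (simp add: LL_def)
  have "LL n m A (zv (pp z) (np z))" using zv_pp_np[OF zs] L by simp
  then show ?thesis using Adeg_eq_LL[OF pp_Exps[OF zs] np_Exps[OF zs]] by simp
qed

lemma LL_diff_smult: "LL n m A z \<Longrightarrow> LL n m A w \<Longrightarrow> LL n m A (\<lambda>i. z i - q * w i)"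
  unfolding LL_def
  by (auto simp: left_diff_distrib sum_subtractf mult.assoc sum_distrib_left[symmetric])

lemma LL_neg: "LL n m A z \<Longrightarrow> LL n m A (\<lambda>i. - z i)"
  unfolding LL_def by (auto simp: sum_negf)

lemma par_refl: "par d d" by (simp add: par_def mult.commute)

lemma par_LL:
  assumes d: "LL n m A d" and i0: "d i0 \<noteq> 0" and p: "par z d" and zs: "\<forall>i. n \<le> i \<longrightarrow> z i = 0"
  shows "LL n m A z"
  unfolding LL_def
proof (intro conjI allI impI)
  fix i assume "n \<le> i" then show "z i = 0" using zs by auto
next
  fix j assume j: "j < m"
  have "d i0 * (\<Sum>i<n. z i * A i j) = (\<Sum>i<n. (z i * d i0) * A i j)"
    by (simp add: sum_distrib_left mult_ac)
  also have "\<dots> = (\<Sum>i<n. (z i0 * d i) * A i j)"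
    using p unfolding par_def by simp
  also have "\<dots> = z i0 * (\<Sum>i<n. d i * A i j)"
    by (simp add: sum_distrib_left mult_ac)
  also have "\<dots> = 0" using d j unfolding LL_def by simp
  finally show "(\<Sum>i<n. z i * A i j) = 0" using i0 by simp
qed

section \<open>The matrix with kernel spanned by d\<close>

definition Ad :: "nat \<Rightarrow> (nat \<Rightarrow> int) \<Rightarrow> nat \<Rightarrow> nat \<Rightarrow> int" where
  "Ad n d i j = (if i = j div n then d (j mod n) else 0) - (if i = j mod n then d (j div n) else 0)"

lemma sum_Ad:
  assumes "j < n * n"
  shows "(\<Sum>i<n. z i * Ad n d i j) = z (j div n) * d (j mod n) - z (j mod n) * d (j div n)"
proof -
  have a: "j div n < n" using assms by (simp add: less_mult_imp_div_less)
  have b: "j mod n < n" using assms by (cases "n = 0") auto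
  have e: "z i * Ad n d i j = (if i = j div n then z i * d (j mod n) else 0)
       - (if i = j mod n then z i * d (j div n) else 0)" for i
    unfolding Ad_def by (simp add: right_diff_distrib)
  have "(\<Sum>i<n. z i * Ad n d i j) = (\<Sum>i<n. (if i = j div n then z i * d (j mod n) else 0))
       - (\<Sum>i<n. (if i = j mod n then z i * d (j div n) else 0))"
    unfolding e by (rule sum_subtractf)
  also have "\<dots> = z (j div n) * d (j mod n) - z (j mod n) * d (j div n)"
    using a b by (simp add: sum.delta)
  finally show ?thesis .
qed

lemma LL_Ad:
  assumes ds: "\<forall>i. n \<le> i \<longrightarrow> d i = 0" and zs: "\<forall>i. n \<le> i \<longrightarrow> z i = 0"
  shows "LL n (n * n) (Ad n d) z \<longleftrightarrow> par z d"
proof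
  assume L: "LL n (n * n) (Ad n d) z"
  show "par z d" unfolding par_def
  proof (intro allI)
    fix a b
    show "z a * d b = z b * d a"
    proof (cases "a < n \<and> b < n")
      case True
      define j where "j = a * n + b"
      have "a * n + b < Suc a * n" using True by simp
      moreover have "Suc a * n \<le> n * n" using True by (intro mult_le_mono1) simp
      ultimately have jl: "j < n * n" unfolding j_def by linarith
      have "j div n = a" "j mod n = b" unfolding j_def using True by auto
      then show ?thesis using L jl sum_Ad[OF jl, of z d] unfolding LL_def by simp
    next
      case False
      then show ?thesis using ds zs by (metis mult_zero_left mult_zero_right not_less)
    qed
  qed
next
  assume P: "par z d"
  show "LL n (n * n) (Ad n d) z" unfolding LL_def
    using zs sum_Ad P by (auto simp: par_def)
qed

lemma Adeg_Ad:
  assumes "u \<in> Exps n" "v \<in> Exps n" "\<forall>i. n \<le> i \<longrightarrow> d i = 0"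
  shows "Adeg n (n * n) (Ad n d) u = Adeg n (n * n) (Ad n d) v \<longleftrightarrow> par (zv u v) d"
  using Adeg_eq_LL[OF assms(1,2)] LL_Ad[OF assms(3), of "zv u v"] zv_supp[OF assms(1,2)] by auto

lemma toric_refine:
  assumes "\<forall>u\<in>Exps n. \<forall>v\<in>Exps n. Adeg n m1 A1 u = Adeg n m1 A1 v \<longrightarrow> Adeg n m2 A2 u = Adeg n m2 A2 v"
  shows "toric_ideal TYPE('k::field) n m1 A1 \<subseteq> toric_ideal TYPE('k) n m2 A2"
proof
  fix f :: "'k mpoly" assume f: "f \<in> toric_ideal TYPE('k) n m1 A1"
  obtain r where r: "\<forall>u\<in>Poly_Mapping.keys f. r u \<in> Poly_Mapping.keys f \<and> Adeg n m1 A1 (r u) = Adeg n m1 A1 u"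
    and fe: "f = (\<Sum>u\<in>Poly_Mapping.keys f. Poly_Mapping.single 0 (Poly_Mapping.lookup f u) * bin u (r u))"
    using toric_repr[OF f] by blast
  have fp: "f \<in> polyring n" using f by (simp add: toric_iff)
  have "(\<Sum>u\<in>Poly_Mapping.keys f. Poly_Mapping.single 0 (Poly_Mapping.lookup f u) * bin u (r u)) \<in> toric_ideal TYPE('k) n m2 A2"
  proof (rule ideal_sum[OF toric_is_ideal])
    fix u assume u: "u \<in> Poly_Mapping.keys f"
    have ue: "u \<in> Exps n" "r u \<in> Exps n" using u r keys_polyring[OF fp] by auto
    have "Adeg n m2 A2 u = Adeg n m2 A2 (r u)" using assms ue r u by metis
    then have "bin u (r u) \<in> toric_ideal TYPE('k) n m2 A2" using bin_in_toric ue by blast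
    moreover have "Poly_Mapping.single 0 (Poly_Mapping.lookup f u) \<in> polyring n"
      by (rule polyring_single) simp
    ultimately show "Poly_Mapping.single 0 (Poly_Mapping.lookup f u) * bin u (r u) \<in> toric_ideal TYPE('k) n m2 A2"
      using toric_is_ideal unfolding is_ideal_def by blast
  qed
  then show "f \<in> toric_ideal TYPE('k) n m2 A2" using fe by simp
qed

lemma mon_decomp:
  assumes "\<forall>i. Poly_Mapping.lookup u i = Poly_Mapping.lookup c i + k * Poly_Mapping.lookup a i"
  shows "(mon u :: 'k::field mpoly) = mon c * mon a ^ k"
  using assms
proof (induction k arbitrary: u)
  case 0
  then have "u = c" by (intro poly_mapping_eqI) simp
  then show ?case by simp
next
  case (Suc k)
  define u' where "u' = u - a"
  have lu': "Poly_Mapping.lookup u' i = Poly_Mapping.lookup c i + k * Poly_Mapping.lookup a i" for i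
    unfolding u'_def using Suc.prems by (simp add: lookup_minus)
  have "u = u' + a"
    by (rule poly_mapping_eqI) (simp add: lookup_add lu' Suc.prems)
  then have "(mon u :: 'k mpoly) = mon u' * mon a" by (simp add: mon_mult)
  also have "\<dots> = mon c * mon a ^ k * mon a" using Suc.IH lu' by simp
  finally show ?case by (simp add: mult_ac)
qed

lemma arith_split:
  fixes x y k :: nat and t :: int
  assumes "int x - int y = int k * t"
  shows "x = (x - k * nat t) + k * nat t \<and> y = (x - k * nat t) + k * nat (- t)"
proof (cases "t \<ge> 0")
  case True
  then have e: "int (k * nat t) = int k * t" by simp
  have "int (k * nat t) \<le> int x" using assms e by linarith
  then have le: "k * nat t \<le> x" by (simp only: of_nat_le_iff)
  have d: "int (x - k * nat t) = int x - int (k * nat t)" using le by (rule of_nat_diff)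
  have "int y = int (x - k * nat t)" using assms e d by linarith
  then have "y = x - k * nat t" by (simp only: of_nat_eq_iff)
  then show ?thesis using le True by simp
next
  case False
  then have "int (k * nat (- t)) = - (int k * t)" by simp
  moreover have "nat t = 0" using False by simp
  moreover have e2: "int (x + k * nat (- t)) = int x + int (k * nat (- t))" by (rule of_nat_add)
  ultimately have "int y = int (x + k * nat (- t))" using assms by linarith
  then have "y = x + k * nat (- t)" by (simp only: of_nat_eq_iff)
  then show ?thesis using \<open>nat t = 0\<close> by simp
qed

lemma bin_div_nat:
  assumes u: "u \<in> Exps n" and v: "v \<in> Exps n" and ws: "\<forall>i. n \<le> i \<longrightarrow> w i = 0"
    and q: "\<forall>i. zv u v i = int k * w i"
  shows "(bin u v :: 'k::field mpoly) \<in> poly_ideal_gen n {bin (pp w) (np w)}"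
proof -
  define a where "a = pp w"
  define b where "b = np w"
  have la: "Poly_Mapping.lookup a i = nat (w i)" for i unfolding a_def using lookup_pp[OF ws] by simp
  have lb: "Poly_Mapping.lookup b i = nat (- w i)" for i unfolding b_def using lookup_np[OF ws] by simp
  define c0 where "c0 i = Poly_Mapping.lookup u i - k * nat (w i)" for i
  have fin: "finite {i. c0 i \<noteq> 0}"
    by (rule finite_subset[of _ "Poly_Mapping.keys u"]) (auto simp: c0_def in_keys_iff)
  define c where "c = Abs_poly_mapping c0"
  have lc: "Poly_Mapping.lookup c i = c0 i" for i unfolding c_def using fin by simp
  have spl: "Poly_Mapping.lookup u i = Poly_Mapping.lookup c i + k * Poly_Mapping.lookup a i \<and>
             Poly_Mapping.lookup v i = Poly_Mapping.lookup c i + k * Poly_Mapping.lookup b i" for i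
    using arith_split[of "Poly_Mapping.lookup u i" "Poly_Mapping.lookup v i" k "w i"] q
    unfolding lc c0_def la lb zv_def by simp
  have cE: "c \<in> Exps n"
  proof -
    have "Poly_Mapping.keys c \<subseteq> Poly_Mapping.keys u" by (auto simp: in_keys_iff lc c0_def)
    then show ?thesis using u by (auto simp: Exps_def)
  qed
  have aE: "a \<in> Exps n" unfolding a_def by (rule pp_Exps[OF ws])
  have bE: "b \<in> Exps n" unfolding b_def by (rule np_Exps[OF ws])
  have mu: "(mon u :: 'k mpoly) = mon c * mon a ^ k" by (rule mon_decomp) (use spl in auto)
  have mv: "(mon v :: 'k mpoly) = mon c * mon b ^ k" by (rule mon_decomp) (use spl in auto)
  define S :: "'k mpoly" where "S = (\<Sum>i<k. mon b ^ (k - Suc i) * mon a ^ i)"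
  have "(bin u v :: 'k mpoly) = mon c * (mon a ^ k - mon b ^ k)"
    unfolding bin_def mu mv by (simp add: right_diff_distrib)
  also have "\<dots> = (mon c * S) * bin a b"
    unfolding power_diff_sumr2[of "mon a" k "mon b"] S_def bin_def by (simp add: mult_ac)
  finally have e: "(bin u v :: 'k mpoly) = (mon c * S) * bin a b" .
  have "mon c * S \<in> polyring n" unfolding S_def using aE bE cE by (auto intro!: polyring_sum)
  then show ?thesis unfolding e a_def[symmetric] b_def[symmetric] by (rule gen_in_single)
qed

lemma bin_div:
  assumes u: "u \<in> Exps n" and v: "v \<in> Exps n" and ws: "\<forall>i. n \<le> i \<longrightarrow> w i = 0"
    and q: "\<forall>i. zv u v i = q * w i"
  shows "(bin u v :: 'k::field mpoly) \<in> poly_ideal_gen n {bin (pp w) (np w)}"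
proof (cases "q \<ge> 0")
  case True
  then have "\<forall>i. zv u v i = int (nat q) * w i" using q by simp
  then show ?thesis by (rule bin_div_nat[OF u v ws])
next
  case False
  have "zv v u i = int (nat (- q)) * w i" for i
    using q zv_swap[of v u i] False by simp
  then have "\<forall>i. zv v u i = int (nat (- q)) * w i" by simp
  then have "(bin v u :: 'k mpoly) \<in> poly_ideal_gen n {bin (pp w) (np w)}" by (rule bin_div_nat[OF v u ws])
  then have "(- 1) * (bin v u :: 'k mpoly) \<in> poly_ideal_gen n {bin (pp w) (np w)}"
    by (rule gen_mult) simp
  then show ?thesis by (simp add: bin_def)
qed

section \<open>Rank one lattices\<close>

lemma rank1:
  assumes u0: "u0 \<in> Exps n" and v0: "v0 \<in> Exps n" and uv0: "u0 \<noteq> v0"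
    and A0: "Adeg n m A u0 = Adeg n m A v0"
    and allpar: "\<forall>u\<in>Exps n. \<forall>v\<in>Exps n. Adeg n m A u = Adeg n m A v \<longrightarrow> par (zv u v) (zv u0 v0)"
  shows "\<exists>a\<in>Exps n. \<exists>b\<in>Exps n. a \<noteq> b \<and> Adeg n m A a = Adeg n m A b \<and>
     toric_ideal TYPE('k::field) n m A \<subseteq> poly_ideal_gen n {bin a b}"
proof -
  define d where "d = zv u0 v0"
  have Ld: "LL n m A d" unfolding d_def using Adeg_eq_LL[OF u0 v0] A0 by simp
  obtain i0 where i0: "d i0 \<noteq> 0" unfolding d_def using zv_neq[OF uv0] by blast
  have allLL: "par z d" if "LL n m A z" for z
  proof -
    have zs: "\<forall>i. n \<le> i \<longrightarrow> z i = 0" using that by (simp add: LL_def)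
    have "par (zv (pp z) (np z)) d" unfolding d_def
      using allpar pp_Exps[OF zs] np_Exps[OF zs] LL_pp_np[OF that] by blast
    then show ?thesis using zv_pp_np[OF zs] by simp
  qed
  define S where "S = {k::nat. 0 < k \<and> (\<exists>z. LL n m A z \<and> z i0 = int k)}"
  have "nat \<bar>d i0\<bar> \<in> S"
  proof (cases "d i0 > 0")
    case True then show ?thesis unfolding S_def using Ld by (auto intro!: exI[of _ d])
  next
    case False then show ?thesis unfolding S_def using Ld i0
      by (auto intro!: exI[of _ "\<lambda>i. - d i"] LL_neg)
  qed
  define g where "g = (LEAST k. k \<in> S)"
  have gS: "g \<in> S" unfolding g_def by (rule LeastI) fact
  have gmin: "\<And>k. k \<in> S \<Longrightarrow> g \<le> k" unfolding g_def by (rule Least_le)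
  obtain w where Lw: "LL n m A w" and wi0: "w i0 = int g" and gpos: "0 < g" using gS unfolding S_def by blast
  have ws: "\<forall>i. n \<le> i \<longrightarrow> w i = 0" using Lw by (simp add: LL_def)
  have cyc: "\<exists>q. \<forall>i. z i = q * w i" if Lz: "LL n m A z" for z
  proof -
    define q where "q = z i0 div int g"
    define z' where "z' i = z i - q * w i" for i
    have Lz': "LL n m A z'" unfolding z'_def by (rule LL_diff_smult[OF Lz Lw])
    have z'i0: "z' i0 = z i0 mod int g" unfolding z'_def q_def wi0
      using minus_mult_div_eq_mod[of "z i0" "int g"] by (simp add: mult.commute)
    have "z' i0 = 0"
    proof (rule ccontr)
      assume "z' i0 \<noteq> 0"
      moreover have "z' i0 \<ge> 0" "z' i0 < int g" using z'i0 gpos by simp_all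
      ultimately have "nat (z' i0) \<in> S" unfolding S_def using Lz' by (auto intro!: exI[of _ z'])
      then have "g \<le> nat (z' i0)" by (rule gmin)
      then show False using \<open>z' i0 < int g\<close> \<open>z' i0 \<ge> 0\<close> by linarith
    qed
    moreover have "par z' d" by (rule allLL[OF Lz'])
    ultimately have "z' j = 0" for j
      using i0 unfolding par_def by (metis mult_eq_0_iff mult_zero_left)
    then show ?thesis unfolding z'_def by (intro exI[of _ q]) (simp add: algebra_simps)
  qed
  define a where "a = pp w"
  define b where "b = np w"
  have aE: "a \<in> Exps n" unfolding a_def by (rule pp_Exps[OF ws])
  have bE: "b \<in> Exps n" unfolding b_def by (rule np_Exps[OF ws])
  have zab: "zv a b = w" unfolding a_def b_def by (rule zv_pp_np[OF ws])
  have ab: "a \<noteq> b" using zab wi0 gpos by (auto simp: zv_def)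
  have Aab: "Adeg n m A a = Adeg n m A b" unfolding a_def b_def by (rule LL_pp_np[OF Lw])
  have sub: "toric_ideal TYPE('k) n m A \<subseteq> poly_ideal_gen n {bin a b}"
  proof
    fix f :: "'k mpoly" assume f: "f \<in> toric_ideal TYPE('k) n m A"
    obtain r where r: "\<forall>u\<in>Poly_Mapping.keys f. r u \<in> Poly_Mapping.keys f \<and> Adeg n m A (r u) = Adeg n m A u"
      and fe: "f = (\<Sum>u\<in>Poly_Mapping.keys f. Poly_Mapping.single 0 (Poly_Mapping.lookup f u) * bin u (r u))"
      using toric_repr[OF f] by blast
    have fp: "f \<in> polyring n" using f by (simp add: toric_iff)
    have "(\<Sum>u\<in>Poly_Mapping.keys f. Poly_Mapping.single 0 (Poly_Mapping.lookup f u) * bin u (r u)) \<in> poly_ideal_gen n {bin a b}"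
    proof (rule gen_sum)
      fix u assume u: "u \<in> Poly_Mapping.keys f"
      have ue: "u \<in> Exps n" "r u \<in> Exps n" using u r keys_polyring[OF fp] by auto
      have "LL n m A (zv u (r u))" using Adeg_eq_LL[OF ue, of m A] r u by simp
      then obtain q where "\<forall>i. zv u (r u) i = q * w i" using cyc by blast
      then have "(bin u (r u) :: 'k mpoly) \<in> poly_ideal_gen n {bin a b}"
        unfolding a_def b_def by (rule bin_div[OF ue ws])
      then show "Poly_Mapping.single 0 (Poly_Mapping.lookup f u) * bin u (r u) \<in> poly_ideal_gen n {bin a b}"
        by (rule gen_mult) (simp add: polyring_single)
    qed
    then show "f \<in> poly_ideal_gen n {bin a b}" using fe by simp
  qed
  show ?thesis using aE bE ab Aab sub by blast
qed

definition deg :: "(nat \<Rightarrow>\<^sub>0 nat) \<Rightarrow> nat" where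
  "deg u = (\<Sum>i\<in>Poly_Mapping.keys u. Poly_Mapping.lookup u i)"

lemma deg_add: "deg (u + v) = deg u + deg v"
  unfolding deg_def by (rule setsum_keys_plus_distrib) auto

lemma deg_0_iff: "deg u = 0 \<longleftrightarrow> u = 0"
proof
  assume "deg u = 0"
  then have "\<forall>i\<in>Poly_Mapping.keys u. Poly_Mapping.lookup u i = 0" unfolding deg_def by simp
  then have "\<forall>i. Poly_Mapping.lookup u i = 0" by (metis in_keys_iff)
  then show "u = 0" by (intro poly_mapping_eqI) simp
qed (simp add: deg_def)

definition tdeg :: "'k::field mpoly \<Rightarrow> nat" where
  "tdeg f = Max (insert 0 (deg ` Poly_Mapping.keys f))"

lemma tdeg_ge: "u \<in> Poly_Mapping.keys f \<Longrightarrow> deg u \<le> tdeg f"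
  unfolding tdeg_def by (rule Max_ge) auto

lemma tdeg_attained:
  assumes "f \<noteq> 0"
  shows "\<exists>u\<in>Poly_Mapping.keys f. deg u = tdeg f"
proof -
  obtain u0 where u0: "u0 \<in> Poly_Mapping.keys f" using assms by (metis keys_eq_empty ex_in_conv)
  have "tdeg f \<in> insert 0 (deg ` Poly_Mapping.keys f)" unfolding tdeg_def by (rule Max_in) auto
  then show ?thesis
  proof
    assume "tdeg f = 0"
    then show ?thesis using tdeg_ge[OF u0] u0 by (intro bexI[of _ u0]) auto
  next
    assume "tdeg f \<in> deg ` Poly_Mapping.keys f"
    then show ?thesis by auto
  qed
qed

definition topc :: "'k::field mpoly \<Rightarrow> 'k mpoly" where
  "topc f = Abs_poly_mapping (\<lambda>u. if deg u = tdeg f then Poly_Mapping.lookup f u else 0)"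

lemma lookup_topc: "Poly_Mapping.lookup (topc f) u = (if deg u = tdeg f then Poly_Mapping.lookup f u else 0)"
proof -
  have "finite {u. (if deg u = tdeg f then Poly_Mapping.lookup f u else 0) \<noteq> 0}"
    by (rule finite_subset[of _ "Poly_Mapping.keys f"]) (auto simp: in_keys_iff)
  then show ?thesis unfolding topc_def by simp
qed

lemma keys_topc: "u \<in> Poly_Mapping.keys (topc f) \<Longrightarrow> deg u = tdeg f"
  by (auto simp: in_keys_iff lookup_topc split: if_splits)

lemma keys_rest: "u \<in> Poly_Mapping.keys (f - topc f) \<Longrightarrow> deg u < tdeg f"
proof -
  assume u: "u \<in> Poly_Mapping.keys (f - topc f)"
  then have "deg u \<noteq> tdeg f" by (auto simp: in_keys_iff lookup_minus lookup_topc)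
  moreover have "u \<in> Poly_Mapping.keys f" using u by (auto simp: in_keys_iff lookup_minus lookup_topc split: if_splits)
  ultimately show ?thesis using tdeg_ge by (meson le_neq_implies_less)
qed

lemma topc_nz: "f \<noteq> 0 \<Longrightarrow> topc f \<noteq> 0"
proof -
  assume "f \<noteq> 0"
  then obtain u where "u \<in> Poly_Mapping.keys f" "deg u = tdeg f" using tdeg_attained by blast
  then have "Poly_Mapping.lookup (topc f) u \<noteq> 0" by (simp add: lookup_topc in_keys_iff)
  then show ?thesis by auto
qed

lemma keys_mult_deg:
  assumes "w \<in> Poly_Mapping.keys (p * q)" "\<And>a. a \<in> Poly_Mapping.keys p \<Longrightarrow> deg a \<le> s" "\<And>b. b \<in> Poly_Mapping.keys q \<Longrightarrow> deg b \<le> t"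
  shows "deg w \<le> s + t"
proof -
  obtain a b where "w = a + b" "a \<in> Poly_Mapping.keys p" "b \<in> Poly_Mapping.keys q"
    using keys_mult[of p q] assms(1) by auto
  then show ?thesis using assms(2,3) by (simp add: deg_add add_mono)
qed

lemma keys_mult_deg_less:
  assumes "w \<in> Poly_Mapping.keys (p * q)" "\<And>a. a \<in> Poly_Mapping.keys p \<Longrightarrow> deg a \<le> s" "\<And>b. b \<in> Poly_Mapping.keys q \<Longrightarrow> deg b < t"
  shows "deg w < s + t"
proof -
  obtain a b where "w = a + b" "a \<in> Poly_Mapping.keys p" "b \<in> Poly_Mapping.keys q"
    using keys_mult[of p q] assms(1) by auto
  then show ?thesis using assms(2,3) by (simp add: deg_add add_le_less_mono)
qed

lemma tdeg_mult:
  fixes f g :: "'k::field mpoly"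
  assumes f: "f \<noteq> 0" and g: "g \<noteq> 0"
  shows "tdeg f + tdeg g \<le> tdeg (f * g)"
proof -
  define tf where "tf = topc f"
  define tg where "tg = topc g"
  define rf where "rf = f - tf"
  define rg where "rg = g - tg"
  have tfk: "\<And>a. a \<in> Poly_Mapping.keys tf \<Longrightarrow> deg a = tdeg f" unfolding tf_def by (rule keys_topc)
  have tgk: "\<And>a. a \<in> Poly_Mapping.keys tg \<Longrightarrow> deg a = tdeg g" unfolding tg_def by (rule keys_topc)
  have rfk: "\<And>a. a \<in> Poly_Mapping.keys rf \<Longrightarrow> deg a < tdeg f" unfolding rf_def tf_def by (rule keys_rest)
  have rgk: "\<And>a. a \<in> Poly_Mapping.keys rg \<Longrightarrow> deg a < tdeg g" unfolding rg_def tg_def by (rule keys_rest)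
  have "tf * tg \<noteq> 0" unfolding tf_def tg_def using topc_nz[OF f] topc_nz[OF g] by simp
  then obtain w where w: "w \<in> Poly_Mapping.keys (tf * tg)" by (metis keys_eq_empty ex_in_conv)
  obtain a b where ab: "w = a + b" "a \<in> Poly_Mapping.keys tf" "b \<in> Poly_Mapping.keys tg"
    using keys_mult[of tf tg] w by auto
  have dw: "deg w = tdeg f + tdeg g" using ab tfk tgk by (simp add: deg_add)
  have fg: "f * g = tf * tg + (tf * rg + (rf * tg + rf * rg))"
    unfolding rf_def rg_def by (simp add: algebra_simps)
  have n1: "w \<notin> Poly_Mapping.keys (tf * rg)"
  proof
    assume "w \<in> Poly_Mapping.keys (tf * rg)"
    then have "deg w < tdeg f + tdeg g" by (rule keys_mult_deg_less) (auto dest: tfk rgk)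
    then show False using dw by simp
  qed
  have n2: "w \<notin> Poly_Mapping.keys (rf * tg)"
  proof
    assume "w \<in> Poly_Mapping.keys (rf * tg)"
    then have "w \<in> Poly_Mapping.keys (tg * rf)" by (simp add: mult.commute)
    then have "deg w < tdeg g + tdeg f" by (rule keys_mult_deg_less) (auto dest: tgk rfk)
    then show False using dw by simp
  qed
  have n3: "w \<notin> Poly_Mapping.keys (rf * rg)"
  proof
    assume "w \<in> Poly_Mapping.keys (rf * rg)"
    then have "deg w < tdeg f + tdeg g" by (rule keys_mult_deg_less) (auto dest: rfk rgk less_imp_le)
    then show False using dw by simp
  qed
  have "Poly_Mapping.lookup (f * g) w = Poly_Mapping.lookup (tf * tg) w"
    unfolding fg using n1 n2 n3 by (simp add: lookup_add in_keys_iff)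
  then have "w \<in> Poly_Mapping.keys (f * g)" using w by (simp add: in_keys_iff)
  then show ?thesis using tdeg_ge dw by metis
qed

lemma tdeg_pow_mult:
  fixes p g :: "'k::field mpoly"
  assumes "p \<noteq> 0" "g \<noteq> 0"
  shows "k * tdeg p \<le> tdeg (p ^ k * g)"
proof (induction k)
  case 0 then show ?case by simp
next
  case (Suc k)
  have "p ^ k * g \<noteq> 0" using assms by simp
  then have "tdeg p + tdeg (p ^ k * g) \<le> tdeg (p * (p ^ k * g))" using tdeg_mult assms(1) by blast
  then show ?case using Suc.IH by (simp add: mult.assoc)
qed

lemma tdeg_bin:
  assumes "a \<noteq> b"
  shows "1 \<le> tdeg (bin a b :: 'k::field mpoly)"
proof -
  have ka: "a \<in> Poly_Mapping.keys (bin a b :: 'k mpoly)"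
    using assms by (simp add: in_keys_iff bin_def mon_def lookup_minus lookup_single)
  have kb: "b \<in> Poly_Mapping.keys (bin a b :: 'k mpoly)"
    using assms by (simp add: in_keys_iff bin_def mon_def lookup_minus lookup_single when_def)
  have "a \<noteq> 0 \<or> b \<noteq> 0" using assms by auto
  then have "deg a \<ge> 1 \<or> deg b \<ge> 1" using deg_0_iff by (metis less_one not_less)
  then show ?thesis using tdeg_ge[OF ka] tdeg_ge[OF kb] by linarith
qed

section \<open>Principal primes have height at most one\<close>

lemma no_chain_principal:
  assumes Q0: "is_prime_ideal n Q0" and Q1: "is_prime_ideal n Q1"
    and Q01: "Q0 \<subset> Q1" and Q1P: "Q1 \<subset> P"
    and Pp: "P \<subseteq> poly_ideal_gen n {p}" and p: "p \<in> polyring n" and tp: "1 \<le> tdeg (p :: 'k::field mpoly)"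
  shows False
proof -
  obtain f where f: "f \<in> Q1" "f \<notin> Q0" using Q01 by blast
  have f0: "f \<noteq> 0" using f prime_0[OF Q0] by auto
  have pQ1: "p \<notin> Q1"
  proof
    assume "p \<in> Q1"
    then have "poly_ideal_gen n {p} \<subseteq> Q1"
      using Q1 gen_least[of n Q1 "{p}"] by (simp add: is_prime_ideal_def)
    then show False using Pp Q1P by blast
  qed
  have Q1poly: "Q1 \<subseteq> polyring n" by (rule prime_ideal_sub[OF Q1])
  have ex: "\<exists>g\<in>Q1. f = p ^ k * g" for k
  proof (induction k)
    case 0 then show ?case using f by auto
  next
    case (Suc k)
    then obtain g where g: "g \<in> Q1" "f = p ^ k * g" by blast
    have "g \<in> poly_ideal_gen n {p}" using g Q1P Pp by blast
    then obtain q where q: "q \<in> polyring n" "g = q * p" using gen_single by blast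
    have "p * q \<in> Q1" using g q by (simp add: mult.commute)
    then have "q \<in> Q1" using Q1 pQ1 p q unfolding is_prime_ideal_def by blast
    moreover have "f = p ^ Suc k * q" using g q by (simp add: mult_ac)
    ultimately show ?case by blast
  qed
  obtain g where g: "g \<in> Q1" "f = p ^ Suc (tdeg f) * g" using ex by blast
  have p0: "p \<noteq> 0" using tp by (auto simp: tdeg_def)
  have g0: "g \<noteq> 0" using g f0 by auto
  have "Suc (tdeg f) * tdeg p \<le> tdeg f" using tdeg_pow_mult[OF p0 g0, of "Suc (tdeg f)"] g by simp
  moreover have "Suc (tdeg f) \<le> Suc (tdeg f) * tdeg p" using mult_le_mono2[OF tp, of "Suc (tdeg f)"] by simp
  ultimately show False by linarith
qed

section \<open>Dickson's lemma\<close>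

lemma no_infinite_descent_on:
  fixes h :: "nat \<Rightarrow> nat"
  assumes Y: "infinite Y" and dec: "\<forall>i\<in>Y. \<forall>j\<in>Y. i < j \<longrightarrow> h j < h i"
  shows False
proof -
  obtain x0 where x0: "x0 \<in> Y" using infinite_imp_nonempty[OF Y] by blast
  define Y' where "Y' = Y - {..x0}"
  have inf: "infinite Y'" unfolding Y'_def using Y by auto
  have inj: "inj_on h Y'"
  proof (rule inj_onI)
    fix x y assume "x \<in> Y'" "y \<in> Y'" "h x = h y"
    then show "x = y" using dec unfolding Y'_def by (metis DiffD1 less_irrefl nat_neq_iff)
  qed
  have "h ` Y' \<subseteq> {..<h x0}"
  proof
    fix y assume "y \<in> h ` Y'"
    then obtain x where x: "x \<in> Y'" "y = h x" by auto
    then have "x0 < x" "x \<in> Y" by (auto simp: Y'_def)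
    then show "y \<in> {..<h x0}" using dec x0 x(2) by auto
  qed
  then have "finite (h ` Y')" by (rule finite_subset) simp
  then have "finite Y'" using inj by (rule finite_imageD)
  then show False using inf by simp
qed

lemma dickson_seq:
  fixes s :: "nat \<Rightarrow> nat \<Rightarrow> nat"
  shows "infinite (Z::nat set) \<Longrightarrow> \<exists>Y\<subseteq>Z. infinite Y \<and> (\<forall>i\<in>Y. \<forall>j\<in>Y. i < j \<longrightarrow> (\<forall>c<N. s i c \<le> s j c))"
proof (induction N arbitrary: Z)
  case 0
  then show ?case by (intro exI[of _ Z]) auto
next
  case (Suc N)
  obtain Y where Y: "Y \<subseteq> Z" "infinite Y" "\<forall>i\<in>Y. \<forall>j\<in>Y. i < j \<longrightarrow> (\<forall>c<N. s i c \<le> s j c)"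
    using Suc.IH[OF Suc.prems] by blast
  define f where "f X = (if \<exists>i j. X = {i, j} \<and> i < j \<and> s j N < s i N then 1 else (0::nat))" for X
  have fij: "f {i, j} = (if s j N < s i N then 1 else 0)" if "i < j" for i j
  proof -
    have "(\<exists>i' j'. {i, j} = {i', j'} \<and> i' < j' \<and> s j' N < s i' N) \<longleftrightarrow> s j N < s i N"
      using that by (auto simp: doubleton_eq_iff)
    then show ?thesis unfolding f_def by simp
  qed
  have "\<forall>x\<in>Y. \<forall>y\<in>Y. x \<noteq> y \<longrightarrow> f {x, y} < 2" unfolding f_def by auto
  then have "\<exists>Y' t. Y' \<subseteq> Y \<and> infinite Y' \<and> t < 2 \<and> (\<forall>x\<in>Y'. \<forall>y\<in>Y'. x \<noteq> y \<longrightarrow> f {x, y} = t)"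
    by (rule Ramsey2[OF Y(2)])
  then obtain Y' t where Y': "Y' \<subseteq> Y" "infinite Y'" "t < 2" "\<forall>x\<in>Y'. \<forall>y\<in>Y'. x \<noteq> y \<longrightarrow> f {x, y} = t"
    by blast
  show ?case
  proof (cases "t = 0")
    case True
    have "\<forall>i\<in>Y'. \<forall>j\<in>Y'. i < j \<longrightarrow> (\<forall>c<Suc N. s i c \<le> s j c)"
    proof (intro ballI impI allI)
      fix i j c assume ij: "i \<in> Y'" "j \<in> Y'" "i < j" and c: "c < Suc N"
      show "s i c \<le> s j c"
      proof (cases "c < N")
        case True
        have "i \<in> Y" "j \<in> Y" using Y'(1) ij by auto
        then show ?thesis using Y(3) ij(3) True by blast
      next
        case False
        then have "c = N" using c by simp
        moreover have "f {i, j} = 0" using Y'(4) ij \<open>t = 0\<close> by auto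
        ultimately show ?thesis using fij[OF ij(3)] by (auto split: if_splits)
      qed
    qed
    then show ?thesis using Y'(1,2) Y(1) by (intro exI[of _ Y']) auto
  next
    case False
    then have t1: "t = 1" using Y'(3) by simp
    have "\<forall>i\<in>Y'. \<forall>j\<in>Y'. i < j \<longrightarrow> s j N < s i N"
    proof (intro ballI impI)
      fix i j assume ij: "i \<in> Y'" "j \<in> Y'" "i < j"
      have "f {i, j} = 1" using Y'(4) ij t1 by auto
      moreover have "f {i, j} = (if s j N < s i N then 1 else 0)" by (rule fij[OF ij(3)])
      ultimately show "s j N < s i N" by (cases "s j N < s i N") simp_all
    qed
    then have False using no_infinite_descent_on[OF Y'(2), of "\<lambda>i. s i N"] by blast
    then show ?thesis ..
  qed
qed

lemma dickson_pair:
  fixes s :: "nat \<Rightarrow> nat \<Rightarrow> nat"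
  shows "\<exists>i j. i < j \<and> (\<forall>c<N. s i c \<le> s j c)"
proof -
  have "infinite (UNIV::nat set)" by simp
  then have "\<exists>Y\<subseteq>UNIV. infinite Y \<and> (\<forall>i\<in>Y. \<forall>j\<in>Y. i < j \<longrightarrow> (\<forall>c<N. s i c \<le> s j c))"
    by (rule dickson_seq)
  then obtain Y where Y: "infinite Y" "\<forall>i\<in>Y. \<forall>j\<in>Y. i < j \<longrightarrow> (\<forall>c<N. s i c \<le> s j c)"
    by blast
  obtain i where i: "i \<in> Y" using infinite_imp_nonempty[OF Y(1)] by blast
  have "infinite (Y - {..i})" using Diff_infinite_finite[OF finite_atMost Y(1)] .
  then obtain j where j: "j \<in> Y - {..i}" using infinite_imp_nonempty by blast
  then have ij: "i < j" "j \<in> Y" by auto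
  have "\<forall>c<N. s i c \<le> s j c" using Y(2) i ij by blast
  then show ?thesis using ij(1) by blast
qed


lemma dickson_basis:
  fixes S :: "'a set" and h :: "'a \<Rightarrow> nat \<Rightarrow> nat"
  shows "\<exists>F. finite F \<and> F \<subseteq> S \<and> (\<forall>x\<in>S. \<exists>y\<in>F. \<forall>c<N. h y c \<le> h x c)"
proof (rule ccontr)
  assume no: "\<not> ?thesis"
  define P where "P F x \<longleftrightarrow> x \<in> S \<and> (\<forall>y\<in>F. \<not> (\<forall>c<N. h y c \<le> h x c))" for F x
  have exP: "\<exists>x. P F x" if "finite F" "F \<subseteq> S" for F
  proof (rule ccontr)
    assume "\<not> (\<exists>x. P F x)"
    then have all: "\<forall>x\<in>S. \<exists>y\<in>F. \<forall>c<N. h y c \<le> h x c" unfolding P_def by auto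
    have "\<exists>F. finite F \<and> F \<subseteq> S \<and> (\<forall>x\<in>S. \<exists>y\<in>F. \<forall>c<N. h y c \<le> h x c)"
      by (intro exI[of _ F] conjI) (use that all in auto)
    with no show False by (rule notE)
  qed
  define pick where "pick F = (SOME x. P F x)" for F
  define G where "G = rec_nat {} (\<lambda>k Gk. insert (pick Gk) Gk)"
  have G0: "G 0 = {}" unfolding G_def by simp
  have GSuc: "G (Suc k) = insert (pick (G k)) (G k)" for k unfolding G_def by simp
  have GS: "finite (G k) \<and> G k \<subseteq> S" for k
  proof (induction k)
    case 0 then show ?case by (simp add: G0)
  next
    case (Suc k)
    have "P (G k) (pick (G k))" unfolding pick_def by (rule someI_ex[OF exP]) (use Suc in auto)
    then show ?case using Suc unfolding GSuc P_def by simp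
  qed
  define sq where "sq k = pick (G k)" for k
  have Psq: "P (G k) (sq k)" for k unfolding sq_def pick_def by (rule someI_ex[OF exP]) (use GS in auto)
  have mem: "i < k \<Longrightarrow> sq i \<in> G k" for i k
  proof (induction k)
    case 0 then show ?case by simp
  next
    case (Suc k)
    then show ?case unfolding sq_def GSuc by (auto simp: less_Suc_eq)
  qed
  obtain i j where ij: "i < j" "\<forall>c<N. h (sq i) c \<le> h (sq j) c"
    using dickson_pair[where s="\<lambda>k. h (sq k)" and N=N] by blast
  have "sq i \<in> G j" using mem ij(1) by blast
  then show False using Psq[of j] ij(2) unfolding P_def by blast
qed

section \<open>Finite generation of toric ideals by binomials\<close>

lemma is_binomial_bin: "is_binomial (bin u v :: 'k::field mpoly)"
  unfolding is_binomial_def bin_def mon_def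
  by (intro exI[of _ u] exI[of _ v] exI[of _ 1] exI[of _ "-1"]) (simp add: single_uminus)

lemma toric_fingen:
  "\<exists>G. finite G \<and> G \<subseteq> toric_ideal TYPE('k::field) n m A \<and> (\<forall>g\<in>G. is_binomial g)
      \<and> toric_ideal TYPE('k) n m A \<subseteq> poly_ideal_gen n G"
proof -
  define M where "M = {(u, v). u \<in> Exps n \<and> v \<in> Exps n \<and> Adeg n m A u = Adeg n m A v \<and> (u, v) \<noteq> (0, 0)}"
  define enc where "enc p c = (if c < n then Poly_Mapping.lookup (fst p) c else Poly_Mapping.lookup (snd p) (c - n))"
    for p :: "(nat \<Rightarrow>\<^sub>0 nat) \<times> (nat \<Rightarrow>\<^sub>0 nat)" and c
  obtain F where F: "finite F" "F \<subseteq> M" "\<forall>x\<in>M. \<exists>y\<in>F. \<forall>c<n+n. enc y c \<le> enc x c"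
    using dickson_basis[where S=M and h=enc and N="n+n"] by blast
  define G :: "'k mpoly set" where "G = (\<lambda>(u, v). bin u v) ` F"
  have Gfin: "finite G" unfolding G_def using F(1) by simp
  have GT: "G \<subseteq> toric_ideal TYPE('k) n m A"
    unfolding G_def using F(2) by (auto simp: M_def intro!: bin_in_toric)
  have Gb: "\<forall>g\<in>G. is_binomial g" unfolding G_def by (auto simp: is_binomial_bin)
  have key: "bin u v \<in> poly_ideal_gen n G"
    if "u \<in> Exps n" "v \<in> Exps n" "Adeg n m A u = Adeg n m A v" for u v
    using that
  proof (induction "deg u + deg v" arbitrary: u v rule: less_induct)
    case less
    show ?case
    proof (cases "u = 0 \<and> v = 0")
      case True then show ?thesis by (simp add: bin_def)
    next
      case False
      then have "(u, v) \<in> M" using less.prems unfolding M_def by auto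
      then obtain y where y: "y \<in> F" "\<forall>c<n+n. enc y c \<le> enc (u, v) c" using F(3) by blast
      obtain u' v' where yy: "y = (u', v')" by (cases y)
      have yM: "(u', v') \<in> M" using y(1) F(2) yy by auto
      then have u'E: "u' \<in> Exps n" and v'E: "v' \<in> Exps n" and A': "Adeg n m A u' = Adeg n m A v'"
        and nz: "(u', v') \<noteq> (0, 0)" unfolding M_def by auto
      have leu: "Poly_Mapping.lookup u' i \<le> Poly_Mapping.lookup u i" for i
      proof (cases "i < n")
        case True then show ?thesis using y(2) yy by (auto simp: enc_def dest: spec[of _ i])
      next
        case False then show ?thesis using Exps_lookup[OF u'E] by simp
      qed
      have lev: "Poly_Mapping.lookup v' i \<le> Poly_Mapping.lookup v i" for i
      proof (cases "i < n")
        case True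
        then have "n + i < n + n" by simp
        then show ?thesis using y(2) yy by (auto simp: enc_def dest: spec[of _ "n + i"])
      next
        case False then show ?thesis using Exps_lookup[OF v'E] by simp
      qed
      define u1 where "u1 = u - u'"
      define v1 where "v1 = v - v'"
      have uu: "u = u1 + u'" unfolding u1_def
        by (rule poly_mapping_eqI) (simp add: lookup_add lookup_minus leu)
      have vv: "v = v' + v1" unfolding v1_def
        by (rule poly_mapping_eqI) (simp add: lookup_add lookup_minus lev)
      have u1E: "u1 \<in> Exps n"
      proof -
        have "Poly_Mapping.keys u1 \<subseteq> Poly_Mapping.keys u" unfolding u1_def
          by (auto simp: in_keys_iff lookup_minus)
        then show ?thesis using less.prems(1) by (auto simp: Exps_def)
      qed
      have v1E: "v1 \<in> Exps n"
      proof -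
        have "Poly_Mapping.keys v1 \<subseteq> Poly_Mapping.keys v" unfolding v1_def
          by (auto simp: in_keys_iff lookup_minus)
        then show ?thesis using less.prems(2) by (auto simp: Exps_def)
      qed
      have A1: "Adeg n m A u1 = Adeg n m A v1"
      proof -
        have "Adeg n m A u = (\<lambda>j. Adeg n m A u1 j + Adeg n m A u' j)" using uu Adeg_add by metis
        moreover have "Adeg n m A v = (\<lambda>j. Adeg n m A v' j + Adeg n m A v1 j)" using vv Adeg_add by metis
        ultimately show ?thesis using less.prems(3) A' by (auto simp: fun_eq_iff)
      qed
      have "deg u' + deg v' > 0" using nz deg_0_iff by auto
      moreover have "deg u = deg u1 + deg u'" using uu deg_add by metis
      moreover have "deg v = deg v' + deg v1" using vv deg_add by metis
      ultimately have lt: "deg u1 + deg v1 < deg u + deg v" by linarith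
      have IH: "bin u1 v1 \<in> poly_ideal_gen n G" using less.hyps[OF lt u1E v1E A1] .
      have bG: "bin u' v' \<in> poly_ideal_gen n G"
        by (rule gen_base) (use y(1) yy in \<open>auto simp: G_def\<close>)
      have e: "(bin u v :: 'k mpoly) = mon u1 * bin u' v' + mon v' * bin u1 v1"
        unfolding bin_def uu vv by (simp add: algebra_simps mon_mult add.commute)
      show ?thesis unfolding e
        by (rule gen_add; rule gen_mult) (use IH bG u1E v'E in auto)
    qed
  qed
  have "toric_ideal TYPE('k) n m A \<subseteq> poly_ideal_gen n G"
  proof
    fix f :: "'k mpoly" assume f: "f \<in> toric_ideal TYPE('k) n m A"
    obtain r where r: "\<forall>u\<in>Poly_Mapping.keys f. r u \<in> Poly_Mapping.keys f \<and> Adeg n m A (r u) = Adeg n m A u"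
      and fe: "f = (\<Sum>u\<in>Poly_Mapping.keys f. Poly_Mapping.single 0 (Poly_Mapping.lookup f u) * bin u (r u))"
      using toric_repr[OF f] by blast
    have fp: "f \<in> polyring n" using f by (simp add: toric_iff)
    have "(\<Sum>u\<in>Poly_Mapping.keys f. Poly_Mapping.single 0 (Poly_Mapping.lookup f u) * bin u (r u)) \<in> poly_ideal_gen n G"
    proof (rule gen_sum)
      fix u assume u: "u \<in> Poly_Mapping.keys f"
      have ue: "u \<in> Exps n" "r u \<in> Exps n" using u r keys_polyring[OF fp] by auto
      have "bin u (r u) \<in> poly_ideal_gen n G" using key ue r u by metis
      then show "Poly_Mapping.single 0 (Poly_Mapping.lookup f u) * bin u (r u) \<in> poly_ideal_gen n G"
        by (rule gen_mult) (simp add: polyring_single)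
    qed
    then show "f \<in> poly_ideal_gen n G" using fe by simp
  qed
  then show ?thesis using Gfin GT Gb by blast
qed

lemma binomial_nf:
  assumes bB: "is_binomial B" and BT: "B \<in> toric_ideal TYPE('k::field) n m A"
  shows "B = 0 \<or> (\<exists>u v c. u \<in> Exps n \<and> v \<in> Exps n \<and> u \<noteq> v \<and> c \<noteq> 0 \<and> Adeg n m A u = Adeg n m A v
           \<and> B = Poly_Mapping.single 0 (c::'k) * bin u v)"
proof -
  obtain u v c e where B: "B = Poly_Mapping.single u (c::'k) + Poly_Mapping.single v e"
    using bB unfolding is_binomial_def by blast
  have Bp: "B \<in> polyring n" using BT by (simp add: toric_iff)
  have ph: "Poly_Mapping.single (Dg n m A u) c + Poly_Mapping.single (Dg n m A v) e = 0"
    using BT B by (simp add: toric_iff phi_add phi_single)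
  show ?thesis
  proof (cases "u = v")
    case True
    then have "Poly_Mapping.single (Dg n m A u) (c + e) = 0" using ph by (simp add: single_add)
    then have "c + e = 0" by (metis lookup_single_eq lookup_zero)
    then have "B = 0" using B True by (simp flip: single_add)
    then show ?thesis ..
  next
    case uv: False
    show ?thesis
    proof (cases "c = 0 \<or> e = 0")
      case True
      then show ?thesis
      proof
        assume c: "c = 0"
        then have "Poly_Mapping.single (Dg n m A v) e = 0" using ph by simp
        then have "e = 0" by (metis lookup_single_eq lookup_zero)
        then show ?thesis using B c by simp
      next
        assume e: "e = 0"
        then have "Poly_Mapping.single (Dg n m A u) c = 0" using ph by simp
        then have "c = 0" by (metis lookup_single_eq lookup_zero)
        then show ?thesis using B e by simp
      qed
    next
      case False
      then have c: "c \<noteq> 0" and e: "e \<noteq> 0" by auto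
      have DD: "Dg n m A u = Dg n m A v"
      proof (rule ccontr)
        assume "Dg n m A u \<noteq> Dg n m A v"
        then have "Poly_Mapping.lookup (Poly_Mapping.single (Dg n m A u) c + Poly_Mapping.single (Dg n m A v) e) (Dg n m A u) = c"
          by (simp add: lookup_add lookup_single_not_eq)
        then show False using ph c by simp
      qed
      then have "Poly_Mapping.single (Dg n m A u) (c + e) = 0" using ph by (simp add: single_add)
      then have ce: "e = - c" by (metis lookup_single_eq lookup_zero add_eq_0_iff)
      have Be: "B = Poly_Mapping.single 0 c * bin u v" using B ce by (simp add: scal_bin single_uminus)
      have "Poly_Mapping.lookup B u = c" using B uv by (simp add: lookup_add lookup_single_not_eq)
      then have "u \<in> Poly_Mapping.keys B" using c by (simp add: in_keys_iff)
      then have uE: "u \<in> Exps n" using keys_polyring[OF Bp] by blast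
      have "Poly_Mapping.lookup B v = e" using B uv by (simp add: lookup_add lookup_single_not_eq)
      then have "v \<in> Poly_Mapping.keys B" using e by (simp add: in_keys_iff)
      then have vE: "v \<in> Exps n" using keys_polyring[OF Bp] by blast
      have "Adeg n m A u = Adeg n m A v" using DD by (simp add: Dg_eq_Dg)
      then show ?thesis using uE vE uv c Be by blast
    qed
  qed
qed

lemma bin_nz: "u \<noteq> v \<Longrightarrow> (bin u v :: 'k::field mpoly) \<noteq> 0"
proof
  assume "u \<noteq> v" "(bin u v :: 'k mpoly) = 0"
  then have "Poly_Mapping.lookup (bin u v :: 'k mpoly) u = 0" by simp
  then show False using \<open>u \<noteq> v\<close> by (simp add: bin_def mon_def lookup_minus lookup_single_not_eq)
qed

lemma split_part:
  fixes I :: "'k::field mpoly set"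
  assumes Ip: "is_prime_ideal n I"
    and no3: "\<forall>C. \<not> ((\<forall>i\<le>3. is_prime_ideal n (C i)) \<and> (\<forall>i<3. C i \<subset> C (Suc i)) \<and> C 3 = I)"
    and J: "J = toric_ideal TYPE('k) n m' A'" and JI: "J \<subseteq> I" "J \<noteq> I"
    and J'p: "is_prime_ideal n J'" and J'I: "J' \<subseteq> I" "J' \<noteq> I"
    and rad: "I = poly_rad n (poly_ideal_gen n (J \<union> J'))"
  shows "\<exists>a\<in>Exps n. \<exists>b\<in>Exps n. a \<noteq> b \<and> bin a b \<in> J \<and> J \<subseteq> poly_ideal_gen n {bin a b}"
proof (cases "\<exists>u0\<in>Exps n. \<exists>v0\<in>Exps n. u0 \<noteq> v0 \<and> Adeg n m' A' u0 = Adeg n m' A' v0")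
  case False
  have J0: "J \<subseteq> {0}"
  proof
    fix f assume f: "f \<in> J"
    then have fT: "f \<in> toric_ideal TYPE('k) n m' A'" using J by simp
    obtain r where r: "\<forall>u\<in>Poly_Mapping.keys f. r u \<in> Poly_Mapping.keys f \<and> Adeg n m' A' (r u) = Adeg n m' A' u"
      and fe: "f = (\<Sum>u\<in>Poly_Mapping.keys f. Poly_Mapping.single 0 (Poly_Mapping.lookup f u) * bin u (r u))"
      using toric_repr[OF fT] by blast
    have fp: "f \<in> polyring n" using fT by (simp add: toric_iff)
    have "\<forall>u\<in>Poly_Mapping.keys f. r u = u"
    proof
      fix u assume u: "u \<in> Poly_Mapping.keys f"
      have "u \<in> Exps n" "r u \<in> Exps n" using u r keys_polyring[OF fp] by auto
      then show "r u = u" using False r u by metis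
    qed
    then have "f = (\<Sum>u\<in>Poly_Mapping.keys f. Poly_Mapping.single 0 (Poly_Mapping.lookup f u) * bin u u)"
      using fe by (metis (no_types, lifting) sum.cong)
    then show "f \<in> {0}" by (simp add: bin_def)
  qed
  have "J \<union> J' \<subseteq> J'" using J0 prime_0[OF J'p] by auto
  then have "poly_ideal_gen n (J \<union> J') \<subseteq> J'"
    using gen_least[of n J'] J'p by (simp add: is_prime_ideal_def)
  then have "I \<subseteq> J'" using rad_prime[OF J'p] rad by blast
  then show ?thesis using J'I by blast
next
  case True
  then obtain u0 v0 where u0: "u0 \<in> Exps n" and v0: "v0 \<in> Exps n" and uv0: "u0 \<noteq> v0"
    and A0: "Adeg n m' A' u0 = Adeg n m' A' v0" by blast
  define d where "d = zv u0 v0"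
  have ds: "\<forall>i. n \<le> i \<longrightarrow> d i = 0" unfolding d_def using zv_supp[OF u0 v0] by blast
  show ?thesis
  proof (cases "\<forall>u\<in>Exps n. \<forall>v\<in>Exps n. Adeg n m' A' u = Adeg n m' A' v \<longrightarrow> par (zv u v) d")
    case True
    obtain a b where ab: "a \<in> Exps n" "b \<in> Exps n" "a \<noteq> b" "Adeg n m' A' a = Adeg n m' A' b"
      "toric_ideal TYPE('k) n m' A' \<subseteq> poly_ideal_gen n {bin a b}"
      using rank1[OF u0 v0 uv0 A0, where 'k='k] True unfolding d_def by blast
    have "bin a b \<in> J" unfolding J by (rule bin_in_toric[OF ab(1,2,4)])
    then show ?thesis using ab J by blast
  next
    case False
    then obtain u1 v1 where u1: "u1 \<in> Exps n" and v1: "v1 \<in> Exps n"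
      and A1: "Adeg n m' A' u1 = Adeg n m' A' v1" and np: "\<not> par (zv u1 v1) d" by blast
    define T where "T = toric_ideal TYPE('k) n (n * n) (Ad n d)"
    define C where "C i = (if i = 0 then {0} else if i = 1 then T else if i = 2 then J else I)" for i :: nat
    have pr: "\<forall>i\<le>3. is_prime_ideal n (C i)"
      unfolding C_def T_def J using zero_prime toric_prime Ip J by auto
    have Ld: "LL n m' A' d" unfolding d_def using Adeg_eq_LL[OF u0 v0] A0 by simp
    obtain i0 where i0: "d i0 \<noteq> 0" unfolding d_def using zv_neq[OF uv0] by blast
    have bT: "bin u0 v0 \<in> T" unfolding T_def
    proof (rule bin_in_toric[OF u0 v0])
      have "par (zv u0 v0) d" unfolding d_def by (rule par_refl)
      then show "Adeg n (n * n) (Ad n d) u0 = Adeg n (n * n) (Ad n d) v0" using Adeg_Ad[OF u0 v0 ds] by simp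
    qed
    have c01: "C 0 \<subset> C 1"
    proof -
      have "{0} \<subseteq> T" unfolding T_def using toric_is_ideal[of n "n * n" "Ad n d", where 'k='k] by (simp add: is_ideal_def)
      moreover have "T \<noteq> {0}" using bT bin_nz[OF uv0] by auto
      ultimately show ?thesis unfolding C_def by auto
    qed
    have TJ: "T \<subseteq> J" unfolding T_def J
    proof (rule toric_refine, intro ballI impI)
      fix u v assume u: "u \<in> Exps n" and v: "v \<in> Exps n" and "Adeg n (n * n) (Ad n d) u = Adeg n (n * n) (Ad n d) v"
      then have "par (zv u v) d" using Adeg_Ad[OF u v ds] by simp
      then have "LL n m' A' (zv u v)" using par_LL[OF Ld i0] zv_supp[OF u v] by blast
      then show "Adeg n m' A' u = Adeg n m' A' v" using Adeg_eq_LL[OF u v] by simp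
    qed
    have "bin u1 v1 \<in> J" unfolding J by (rule bin_in_toric[OF u1 v1 A1])
    moreover have "bin u1 v1 \<notin> T"
    proof
      assume "bin u1 v1 \<in> T"
      then have "Adeg n (n * n) (Ad n d) u1 = Adeg n (n * n) (Ad n d) v1" unfolding T_def by (rule toric_bin_imp)
      then show False using Adeg_Ad[OF u1 v1 ds] np by simp
    qed
    ultimately have c12: "C 1 \<subset> C 2" using TJ unfolding C_def by auto
    have c23: "C 2 \<subset> C 3" using JI unfolding C_def by auto
    have "\<forall>i<3. C i \<subset> C (Suc i)"
    proof (intro allI impI)
      fix i :: nat assume "i < 3"
      then have "i = 0 \<or> i = 1 \<or> i = 2" by auto
      then show "C i \<subset> C (Suc i)" using c01 c12 c23 by (auto simp: numeral_2_eq_2 numeral_3_eq_3)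
    qed
    moreover have "C 3 = I" unfolding C_def by simp
    ultimately have False using no3 pr by blast
    then show ?thesis ..
  qed
qed

lemma image_lessThan_2: "B ` {..<2::nat} = {B 0, B 1}"
  by (auto simp: lessThan_def numeral_2_eq_2 less_Suc_eq)

lemma image_lessThan_1: "B ` {..<1::nat} = {B 0}"
  by auto

theorem corollary4p2:
  fixes n m :: nat and A :: "nat \<Rightarrow> nat \<Rightarrow> int"
  assumes "pointed_config n m A"
    and "ideal_height n (toric_ideal TYPE('k::field) n m A) = 2"
  shows "radical_splittable n (toric_ideal TYPE('k) n m A)
     \<longleftrightarrow> stci_binomials n (toric_ideal TYPE('k) n m A)"
proof -
  define I where "I = toric_ideal TYPE('k) n m A"
  have Ip: "is_prime_ideal n I" unfolding I_def by (rule toric_prime)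
  have Ipoly: "I \<subseteq> polyring n" by (rule prime_ideal_sub[OF Ip])
  have ph: "prime_height n I = 2" using assms(2) ih_prime[OF Ip] unfolding I_def by simp
  obtain C where C: "\<forall>i\<le>2. is_prime_ideal n (C i)" "\<forall>i<2. C i \<subset> C (Suc i)" "C 2 = I"
    using ph2_ex2[OF ph] by blast
  have C01: "C 0 \<subset> C 1" and C12: "C 1 \<subset> C 2" using C(2) by (auto simp: numeral_2_eq_2)
  have C0p: "is_prime_ideal n (C 0)" and C1p: "is_prime_ideal n (C 1)" using C(1) by auto
  have no3: "\<forall>D. \<not> ((\<forall>i\<le>3. is_prime_ideal n (D i)) \<and> (\<forall>i<3. D i \<subset> D (Suc i)) \<and> D 3 = I)"
    using ph2_no3[OF ph] by blast
  have noprinc: False if "I \<subseteq> poly_ideal_gen n {p}" "p \<in> polyring n" "1 \<le> tdeg (p::'k mpoly)" for p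
    by (rule no_chain_principal[OF C0p C1p C01 _ that]) (use C12 C(3) in simp)
  have NZ: False if "I \<subseteq> {0}"
  proof -
    have "C 1 \<subseteq> {0}" using C12 C(3) that by auto
    moreover have "0 \<in> C 0" by (rule prime_0[OF C0p])
    ultimately show False using C01 by auto
  qed
  define Pb where "Pb t \<longleftrightarrow> (\<exists>B :: nat \<Rightarrow> 'k mpoly. (\<forall>i<t. is_binomial (B i) \<and> B i \<in> I)
       \<and> I = poly_rad n (poly_ideal_gen n (B ` {..<t})))" for t
  have bar_eq: "bar n I = (LEAST t. Pb t)" unfolding bar_def Pb_def ..
  have not0: "\<not> Pb 0"
  proof
    assume "Pb 0"
    then obtain B :: "nat \<Rightarrow> 'k mpoly" where "I = poly_rad n (poly_ideal_gen n (B ` {..<0}))" unfolding Pb_def by blast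
    then have "I \<subseteq> {0}" using rad_zero[OF gen_zero[of "B ` {..<0}" n]] by simp
    then show False by (rule NZ)
  qed
  have single_gen_ok: False if B0: "is_binomial B0" "B0 \<in> I" and rI: "I = poly_rad n (poly_ideal_gen n {B0})" for B0
  proof -
    have "B0 = 0 \<or> (\<exists>u v c. u \<in> Exps n \<and> v \<in> Exps n \<and> u \<noteq> v \<and> c \<noteq> 0 \<and> Adeg n m A u = Adeg n m A v
           \<and> B0 = Poly_Mapping.single 0 (c::'k) * bin u v)"
      using binomial_nf[OF B0(1)] B0(2) unfolding I_def by blast
    then show False
    proof
      assume "B0 = 0"
      then have "I \<subseteq> {0}" using rI rad_zero[OF gen_zero[of "{B0}" n]] by simp
      then show False by (rule NZ)
    next
      assume "\<exists>u v c. u \<in> Exps n \<and> v \<in> Exps n \<and> u \<noteq> v \<and> c \<noteq> 0 \<and> Adeg n m A u = Adeg n m A v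
           \<and> B0 = Poly_Mapping.single 0 (c::'k) * bin u v"
      then obtain u v c where u: "u \<in> Exps n" and v: "v \<in> Exps n" and uv: "u \<noteq> v" and Auv: "Adeg n m A u = Adeg n m A v"
        and B0e: "B0 = Poly_Mapping.single 0 (c::'k) * bin u v" by blast
      define d where "d = zv u v"
      have ds: "\<forall>i. n \<le> i \<longrightarrow> d i = 0" unfolding d_def using zv_supp[OF u v] by blast
      define T where "T = toric_ideal TYPE('k) n (n * n) (Ad n d)"
      have Tp: "is_prime_ideal n T" unfolding T_def by (rule toric_prime)
      have "bin u v \<in> T" unfolding T_def
      proof (rule bin_in_toric[OF u v])
        have "par (zv u v) d" unfolding d_def by (rule par_refl)
        then show "Adeg n (n * n) (Ad n d) u = Adeg n (n * n) (Ad n d) v" using Adeg_Ad[OF u v ds] by simp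
      qed
      then have "B0 \<in> T" unfolding B0e using Tp polyring_single[of 0 n c]
        by (simp add: is_prime_ideal_def is_ideal_def)
      then have genT: "poly_ideal_gen n {B0} \<subseteq> T"
        using gen_least[of n T "{B0}"] Tp by (simp add: is_prime_ideal_def)
      have allpar: "\<forall>u'\<in>Exps n. \<forall>v'\<in>Exps n. Adeg n m A u' = Adeg n m A v' \<longrightarrow> par (zv u' v') (zv u v)"
      proof (intro ballI impI)
        fix u' v' assume u': "u' \<in> Exps n" and v': "v' \<in> Exps n" and A': "Adeg n m A u' = Adeg n m A v'"
        have "(bin u' v' :: 'k mpoly) \<in> I" unfolding I_def by (rule bin_in_toric[OF u' v' A'])
        then have "(bin u' v' :: 'k mpoly) \<in> poly_rad n (poly_ideal_gen n {B0})" using rI by simp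
        then obtain N where "bin u' v' ^ N \<in> poly_ideal_gen n {B0}" unfolding poly_rad_def by blast
        then have "bin u' v' ^ N \<in> T" using genT by blast
        then have "(bin u' v' :: 'k mpoly) \<in> T" using prime_pow[OF Tp] u' v' by simp
        then have "Adeg n (n * n) (Ad n d) u' = Adeg n (n * n) (Ad n d) v'" unfolding T_def by (rule toric_bin_imp)
        then show "par (zv u' v') (zv u v)" using Adeg_Ad[OF u' v' ds] unfolding d_def by simp
      qed
      obtain a b where ab: "a \<in> Exps n" "b \<in> Exps n" "a \<noteq> b"
        "toric_ideal TYPE('k) n m A \<subseteq> poly_ideal_gen n {bin a b}"
        using rank1[OF u v uv Auv allpar, where 'k='k] by blast
      show False
        by (rule noprinc[of "bin a b"]) (use ab tdeg_bin[OF ab(3)] in \<open>auto simp: I_def\<close>)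
    qed
  qed
  have not1: "\<not> Pb 1"
  proof
    assume "Pb 1"
    then obtain B :: "nat \<Rightarrow> 'k mpoly" where B: "\<forall>i<1. is_binomial (B i) \<and> B i \<in> I"
      and r: "I = poly_rad n (poly_ideal_gen n (B ` {..<1}))" unfolding Pb_def by blast
    have "is_binomial (B 0)" "B 0 \<in> I" using B by auto
    moreover have "I = poly_rad n (poly_ideal_gen n {B 0})" using r unfolding image_lessThan_1 .
    ultimately show False by (rule single_gen_ok)
  qed
  have ge2: "2 \<le> t" if "Pb t" for t
  proof (rule ccontr)
    assume "\<not> 2 \<le> t"
    then have "t = 0 \<or> t = 1" by auto
    then show False using that not0 not1 by auto
  qed
  show ?thesis
  proof
    assume "radical_splittable n (toric_ideal TYPE('k) n m A)"
    then obtain I1 I2 where t1: "is_toric_ideal n I1" and t2: "is_toric_ideal n I2"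
      and rI: "I = poly_rad n (poly_ideal_gen n (I1 \<union> I2))" and n1: "I1 \<noteq> I" and n2: "I2 \<noteq> I"
      unfolding radical_splittable_def I_def by blast
    obtain m1 A1 where I1: "I1 = toric_ideal TYPE('k) n m1 A1" using t1 unfolding is_toric_ideal_def by blast
    obtain m2 A2 where I2: "I2 = toric_ideal TYPE('k) n m2 A2" using t2 unfolding is_toric_ideal_def by blast
    have I12p: "I1 \<union> I2 \<subseteq> polyring n" unfolding I1 I2 using toric_subset by blast
    have I12I: "I1 \<union> I2 \<subseteq> I"
    proof -
      have "I1 \<union> I2 \<subseteq> poly_ideal_gen n (I1 \<union> I2)" by (auto intro: gen_base)
      also have "\<dots> \<subseteq> poly_rad n (poly_ideal_gen n (I1 \<union> I2))" by (rule rad_sup[OF gen_subset_polyring[OF I12p]])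
      finally show ?thesis using rI by simp
    qed
    have p1p: "is_prime_ideal n I1" unfolding I1 by (rule toric_prime)
    have p2p: "is_prime_ideal n I2" unfolding I2 by (rule toric_prime)
    obtain a1 b1 where ab1: "a1 \<in> Exps n" "b1 \<in> Exps n" "a1 \<noteq> b1" "bin a1 b1 \<in> I1" "I1 \<subseteq> poly_ideal_gen n {bin a1 b1}"
      using split_part[OF Ip no3 I1 _ n1 p2p _ n2 rI] I12I by blast
    have rI': "I = poly_rad n (poly_ideal_gen n (I2 \<union> I1))" using rI by (simp add: Un_commute)
    obtain a2 b2 where ab2: "a2 \<in> Exps n" "b2 \<in> Exps n" "a2 \<noteq> b2" "bin a2 b2 \<in> I2" "I2 \<subseteq> poly_ideal_gen n {bin a2 b2}"
      using split_part[OF Ip no3 I2 _ n2 p1p _ n1 rI'] I12I by blast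
    define B where "B i = (if i = 0 then bin a1 b1 else bin a2 b2 :: 'k mpoly)" for i :: nat
    have BB: "B ` {..<2} = {bin a1 b1, bin a2 b2}" unfolding image_lessThan_2 B_def by simp
    have Pp: "{bin a1 b1, bin a2 b2} \<subseteq> polyring n" using ab1 ab2 by simp
    have g1: "poly_ideal_gen n (I1 \<union> I2) \<subseteq> poly_ideal_gen n {bin a1 b1, bin a2 b2}"
    proof (rule gen_sub_gen[OF _ Pp])
      have "poly_ideal_gen n {bin a1 b1} \<subseteq> poly_ideal_gen n {bin a1 b1, bin a2 b2}" by (rule gen_mono) auto
      moreover have "poly_ideal_gen n {bin a2 b2} \<subseteq> poly_ideal_gen n {bin a1 b1, bin a2 b2}" by (rule gen_mono) auto
      ultimately show "I1 \<union> I2 \<subseteq> poly_ideal_gen n {bin a1 b1, bin a2 b2}" using ab1(5) ab2(5) by blast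
    qed
    have g2: "poly_ideal_gen n {bin a1 b1, bin a2 b2} \<subseteq> poly_ideal_gen n (I1 \<union> I2)"
      by (rule gen_mono) (use ab1(4) ab2(4) in auto)
    have P2: "Pb 2"
      unfolding Pb_def
    proof (intro exI[of _ B] conjI)
      show "\<forall>i<2. is_binomial (B i) \<and> B i \<in> I"
        unfolding B_def using ab1(4) ab2(4) I12I by (auto simp: is_binomial_bin)
      have "poly_ideal_gen n (I1 \<union> I2) = poly_ideal_gen n {bin a1 b1, bin a2 b2}" using g1 g2 by blast
      then show "I = poly_rad n (poly_ideal_gen n (B ` {..<2}))" using rI BB by simp
    qed
    have "bar n I = 2" unfolding bar_eq by (rule Least_equality[where P=Pb]) (use P2 ge2 in auto)
    then show "stci_binomials n (toric_ideal TYPE('k) n m A)"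
      unfolding stci_binomials_def using assms(2) I_def by (simp add: numeral_eq_enat)
  next
    assume "stci_binomials n (toric_ideal TYPE('k) n m A)"
    then have "enat (bar n I) = 2" unfolding stci_binomials_def using assms(2) I_def by simp
    then have bar2: "bar n I = 2" by (simp add: numeral_eq_enat)
    obtain G where G: "finite G" "G \<subseteq> I" "\<forall>g\<in>G. is_binomial g" "I \<subseteq> poly_ideal_gen n G"
      using toric_fingen[of n m A, where 'k='k] unfolding I_def by blast
    obtain xs where xs: "set xs = G" using finite_list[OF G(1)] by blast
    have "Pb (length xs)"
      unfolding Pb_def
    proof (intro exI[of _ "\<lambda>i. xs ! i"] conjI)
      have im: "(\<lambda>i. xs ! i) ` {..<length xs} = G" using xs by (auto simp: set_conv_nth)
      show "\<forall>i<length xs. is_binomial (xs ! i) \<and> xs ! i \<in> I" using G xs by auto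
      have "poly_ideal_gen n G \<subseteq> I" using gen_least[of n I G] Ip G(2) by (simp add: is_prime_ideal_def)
      then have "poly_rad n (poly_ideal_gen n G) \<subseteq> I" by (rule rad_prime[OF Ip])
      moreover have "I \<subseteq> poly_rad n (poly_ideal_gen n G)"
        using G(4) rad_sup[OF gen_subset_polyring[of G n]] G(2) Ipoly by blast
      ultimately show "I = poly_rad n (poly_ideal_gen n ((\<lambda>i. xs ! i) ` {..<length xs}))" using im by blast
    qed
    then have "Pb (bar n I)" unfolding bar_eq by (rule LeastI)
    then have "Pb 2" using bar2 by simp
    then obtain B :: "nat \<Rightarrow> 'k mpoly" where B: "\<forall>i<2. is_binomial (B i) \<and> B i \<in> I"
      and rB: "I = poly_rad n (poly_ideal_gen n {B 0, B 1})" unfolding Pb_def image_lessThan_2 by blast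
    have B0: "is_binomial (B 0)" "B 0 \<in> I" and B1: "is_binomial (B 1)" "B 1 \<in> I" using B by auto
    have Bpoly: "B 0 \<in> polyring n" "B 1 \<in> polyring n" using B0 B1 Ipoly by auto
    have nz0: "B 0 \<noteq> 0"
    proof
      assume z: "B 0 = 0"
      have "poly_ideal_gen n {B 0, B 1} = poly_ideal_gen n {B 1}"
      proof
        show "poly_ideal_gen n {B 0, B 1} \<subseteq> poly_ideal_gen n {B 1}"
          by (rule gen_sub_gen) (use z Bpoly in \<open>auto intro: gen_base\<close>)
        show "poly_ideal_gen n {B 1} \<subseteq> poly_ideal_gen n {B 0, B 1}" by (rule gen_mono) auto
      qed
      then show False using single_gen_ok[OF B1] rB by simp
    qed
    have nz1: "B 1 \<noteq> 0"
    proof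
      assume z: "B 1 = 0"
      have "poly_ideal_gen n {B 0, B 1} = poly_ideal_gen n {B 0}"
      proof
        show "poly_ideal_gen n {B 0, B 1} \<subseteq> poly_ideal_gen n {B 0}"
          by (rule gen_sub_gen) (use z Bpoly in \<open>auto intro: gen_base\<close>)
        show "poly_ideal_gen n {B 0} \<subseteq> poly_ideal_gen n {B 0, B 1}" by (rule gen_mono) auto
      qed
      then show False using single_gen_ok[OF B0] rB by simp
    qed
    have part: "\<exists>J. is_toric_ideal n J \<and> B j \<in> J \<and> J \<subseteq> I \<and> J \<noteq> I"
      if Bj: "is_binomial (B j)" "B j \<in> I" "B j \<noteq> 0" for j
    proof -
      obtain u v c where u: "u \<in> Exps n" and v: "v \<in> Exps n" and uv: "u \<noteq> v" and Auv: "Adeg n m A u = Adeg n m A v"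
        and Be: "B j = Poly_Mapping.single 0 (c::'k) * bin u v"
        using binomial_nf[OF Bj(1), of n m A] Bj(2,3) unfolding I_def by blast
      define d where "d = zv u v"
      have ds: "\<forall>i. n \<le> i \<longrightarrow> d i = 0" unfolding d_def using zv_supp[OF u v] by blast
      define J where "J = toric_ideal TYPE('k) n (n * n) (Ad n d)"
      have Jt: "is_toric_ideal n J" unfolding J_def is_toric_ideal_def by blast
      have Jp: "is_prime_ideal n J" unfolding J_def by (rule toric_prime)
      have AAd: "Adeg n (n * n) (Ad n d) u = Adeg n (n * n) (Ad n d) v"
      proof -
        have "par (zv u v) d" unfolding d_def by (rule par_refl)
        then show ?thesis using Adeg_Ad[OF u v ds] by simp
      qed
      have "bin u v \<in> J" unfolding J_def by (rule bin_in_toric[OF u v AAd])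
      then have BJ: "B j \<in> J" unfolding Be using Jp polyring_single[of 0 n c]
        by (simp add: is_prime_ideal_def is_ideal_def)
      have Ld: "LL n m A d" unfolding d_def using Adeg_eq_LL[OF u v] Auv by simp
      obtain i0 where i0: "d i0 \<noteq> 0" unfolding d_def using zv_neq[OF uv] by blast
      have JI: "J \<subseteq> I" unfolding J_def I_def
      proof (rule toric_refine, intro ballI impI)
        fix u' v' assume u': "u' \<in> Exps n" and v': "v' \<in> Exps n" and "Adeg n (n * n) (Ad n d) u' = Adeg n (n * n) (Ad n d) v'"
        then have "par (zv u' v') d" using Adeg_Ad[OF u' v' ds] by simp
        then have "LL n m A (zv u' v')" using par_LL[OF Ld i0] zv_supp[OF u' v'] by blast
        then show "Adeg n m A u' = Adeg n m A v'" using Adeg_eq_LL[OF u' v'] by simp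
      qed
      have JnI: "J \<noteq> I"
      proof
        assume JI': "J = I"
        have allpar: "\<forall>u'\<in>Exps n. \<forall>v'\<in>Exps n. Adeg n (n * n) (Ad n d) u' = Adeg n (n * n) (Ad n d) v' \<longrightarrow> par (zv u' v') (zv u v)"
          using Adeg_Ad[OF _ _ ds] unfolding d_def by blast
        obtain a b where ab: "a \<in> Exps n" "b \<in> Exps n" "a \<noteq> b"
          "toric_ideal TYPE('k) n (n * n) (Ad n d) \<subseteq> poly_ideal_gen n {bin a b}"
          using rank1[OF u v uv AAd allpar, where 'k='k] by blast
        have "I \<subseteq> poly_ideal_gen n {bin a b}" using ab(4) JI' unfolding J_def by simp
        then show False by (rule noprinc) (use ab tdeg_bin[OF ab(3)] in auto)
      qed
      show ?thesis using Jt BJ JI JnI by blast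
    qed
    obtain J1 where J1: "is_toric_ideal n J1" "B 0 \<in> J1" "J1 \<subseteq> I" "J1 \<noteq> I" using part[OF B0 nz0] by blast
    obtain J2 where J2: "is_toric_ideal n J2" "B 1 \<in> J2" "J2 \<subseteq> I" "J2 \<noteq> I" using part[OF B1 nz1] by blast
    have J12p: "J1 \<union> J2 \<subseteq> polyring n" using J1(3) J2(3) Ipoly by blast
    have "I = poly_rad n (poly_ideal_gen n (J1 \<union> J2))"
    proof
      have "poly_ideal_gen n {B 0, B 1} \<subseteq> poly_ideal_gen n (J1 \<union> J2)"
        by (rule gen_sub_gen[OF _ J12p]) (use J1(2) J2(2) in \<open>auto intro: gen_base\<close>)
      then show "I \<subseteq> poly_rad n (poly_ideal_gen n (J1 \<union> J2))" using rB rad_mono by blast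
      have "poly_ideal_gen n (J1 \<union> J2) \<subseteq> I"
        using gen_least[of n I "J1 \<union> J2"] Ip J1(3) J2(3) by (simp add: is_prime_ideal_def)
      then show "poly_rad n (poly_ideal_gen n (J1 \<union> J2)) \<subseteq> I" by (rule rad_prime[OF Ip])
    qed
    then show "radical_splittable n (toric_ideal TYPE('k) n m A)"
      unfolding radical_splittable_def I_def[symmetric] using J1 J2 by blast
  qed
qed

end
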